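(* Let $L$ be an invariant intrinsic location functional, $\mathbf X$ a periodic stationary process with period $1$, and $T\in(0,1]$. Then for all $t\in(0,T)$, $$f^{\mathbf X}_{L,T}(t)\le \max\Big(\Big\lfloor\frac{1-T}{t}\Big\rfloor,\Big\lfloor\frac{1-T}{T-t}\Big\rfloor\Big)+2.$$ Moreover, for every $t\in(0,T/2)$ such that $(1-T)/t$ is not an integer, and for every $t\in[T/2,T)$ such that $(1-T)/(T-t)$ is not an integer, there exist an invariant intrinsic location functional $L$ and a periodic stationary process $\mathbf X$ with period $1$ for which equality holds at $t$.
   Context: Let $H$ be a set of functions $\mathbb R\to\mathbb R$ with period $1$, invariant under shifts ($\theta_cg(x)=g(x+c)$), with the cylindrical $\sigma$-field; $\mathcal I$ is the set of compact intervals $[a,b]$, $a<b$. An intrinsic location functional is a map $L:H\times\mathcal I\to\mathbb R\cup\{\infty\}$ such that: (i) $L(\cdot,I)$ is measurable; (ii) $L(g,I)\in I\cup\{\infty\}$; (iii) $L(g,I)=L(\theta_cg,I-c)+c$ (with $\infty+c=\infty$); (iv) if $I_2\subseteq I_1$ and $L(g,I_1)\in I_2$ then $L(g,I_2)=L(g,I_1)$; (v) if $I_2\subseteq I_1$ and $L(g,I_2)\ne\infty$ then $L(g,I_1)\neq\infty$. It is invariant if moreover $L(g,I)\ne\infty$ always and $L(g,[0,1])=L(g,[a,a+1])\pmod1$ for all $a\in\mathbb R$, $g\in H$. A periodic stationary process with period $1$ is a stationary process with continuous sample paths of period $1$ lying in $H$. $f^{\mathbf X}_{L,T}$ denotes the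 càdlàg density on $(0,T)$ of the law of $L(\mathbf X,[0,T])$. *)

theory Defs
  imports "HOL-Probability.Probability"
begin

definition path_space :: "(real \<Rightarrow> real) measure" where
  "path_space = Pi\<^sub>M UNIV (\<lambda>_. borel)"

definition shift :: "real \<Rightarrow> (real \<Rightarrow> real) \<Rightarrow> (real \<Rightarrow> real)" where
  "shift c g = (\<lambda>x. g (x + c))"

definition periodic_shift_class :: "(real \<Rightarrow> real) set \<Rightarrow> bool" where
  "periodic_shift_class H \<longleftrightarrow>
     (\<forall>g\<in>H. \<forall>x. g (x + 1) = g x) \<and> (\<forall>g\<in>H. \<forall>c. shift c g \<in> H)"

definition H_space :: "(real \<Rightarrow> real) set \<Rightarrow> (real \<Rightarrow> real) measure" where
  "H_space H = restrict_space path_space H"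

text \<open>Intrinsic location functional. The compact interval [a,b], a<b, is encoded by its
  endpoints; the value infinity is the ereal PInfty.\<close>
definition intrinsic_location_functional ::
  "(real \<Rightarrow> real) set \<Rightarrow> ((real \<Rightarrow> real) \<Rightarrow> real \<Rightarrow> real \<Rightarrow> ereal) \<Rightarrow> bool" where
  "intrinsic_location_functional H L \<longleftrightarrow>
     (\<forall>a b. a < b \<longrightarrow> (\<lambda>g. L g a b) \<in> borel_measurable (H_space H)) \<and>
     (\<forall>g\<in>H. \<forall>a b. a < b \<longrightarrow> L g a b \<in> ereal ` {a..b} \<union> {\<infinity>}) \<and>
     (\<forall>g\<in>H. \<forall>a b c. a < b \<longrightarrow> L g a b = L (shift c g) (a - c) (b - c) + ereal c) \<and>
     (\<forall>g\<in>H. \<forall>a1 b1 a2 b2. a1 < b1 \<and> a2 < b2 \<and> a1 \<le> a2 \<and> b2 \<le> b1 \<longrightarrow>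
        L g a1 b1 \<in> ereal ` {a2..b2} \<longrightarrow> L g a2 b2 = L g a1 b1) \<and>
     (\<forall>g\<in>H. \<forall>a1 b1 a2 b2. a1 < b1 \<and> a2 < b2 \<and> a1 \<le> a2 \<and> b2 \<le> b1 \<longrightarrow>
        L g a2 b2 \<noteq> \<infinity> \<longrightarrow> L g a1 b1 \<noteq> \<infinity>)"

definition invariant_ILF ::
  "(real \<Rightarrow> real) set \<Rightarrow> ((real \<Rightarrow> real) \<Rightarrow> real \<Rightarrow> real \<Rightarrow> ereal) \<Rightarrow> bool" where
  "invariant_ILF H L \<longleftrightarrow>
     intrinsic_location_functional H L \<and>
     (\<forall>g\<in>H. \<forall>a b. a < b \<longrightarrow> L g a b \<noteq> \<infinity>) \<and>
     (\<forall>g\<in>H. \<forall>a. frac (real_of_ereal (L g 0 1)) = frac (real_of_ereal (L g a (a + 1))))"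

definition periodic_stationary_process ::
  "(real \<Rightarrow> real) set \<Rightarrow> 'w measure \<Rightarrow> ('w \<Rightarrow> real \<Rightarrow> real) \<Rightarrow> bool" where
  "periodic_stationary_process H M X \<longleftrightarrow>
     prob_space M \<and>
     X \<in> measurable M path_space \<and>
     (\<forall>\<omega>\<in>space M. X \<omega> \<in> H \<and> continuous_on UNIV (X \<omega>)) \<and>
     (\<forall>c. distr M path_space (\<lambda>\<omega>. shift c (X \<omega>)) = distr M path_space X)"

definition cadlag_density_on ::
  "real \<Rightarrow> 'w measure \<Rightarrow> ('w \<Rightarrow> ereal) \<Rightarrow> (real \<Rightarrow> real) \<Rightarrow> bool" where
  "cadlag_density_on T M Y f \<longleftrightarrow>
     (\<forall>t\<in>{0<..<T}. 0 \<le> f t \<and> continuous (at_right t) f \<and> (\<exists>l. (f \<longlongrightarrow> l) (at_left t))) \<and>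
     (\<forall>A\<in>sets borel. A \<subseteq> {0<..<T} \<longrightarrow>
        emeasure M {\<omega>\<in>space M. Y \<omega> \<in> ereal ` A} = (\<integral>\<^sup>+x\<in>A. ennreal (f x) \<partial>lborel))"

definition density_bound :: "real \<Rightarrow> real \<Rightarrow> real" where
  "density_bound T t = max (of_int \<lfloor>(1 - T) / t\<rfloor>) (of_int \<lfloor>(1 - T) / (T - t)\<rfloor>) + 2"

end

theory Submission
  imports Defs
begin

lemma shift_shift: "shift c (shift d g) = shift (d + c) g"
  by (simp add: shift_def algebra_simps)

lemma periodic_int:
  assumes "\<forall>x. g (x + 1) = g x"
  shows "g (x + of_int k) = g x"
proof (induct k arbitrary: x rule: int_induct[where k=0])
  case base then show ?case by simp
next
  case (step1 i) then show ?case using assms by (metis add.assoc of_int_add of_int_1)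
next
  case (step2 i)
  have "g (x + of_int (i - 1)) = g (x + of_int (i - 1) + 1)" using assms by metis
  also have "\<dots> = g (x + of_int i)" by (simp add: algebra_simps)
  finally show ?case using step2 by simp
qed

lemma shift_int:
  assumes "periodic_shift_class H" "g \<in> H"
  shows "shift (of_int k) g = g"
  using assms periodic_int[of g] unfolding periodic_shift_class_def shift_def by auto

definition Lr where "Lr L g a b = real_of_ereal (L g a b)"

lemma Lr_basic:
  assumes "invariant_ILF H L" "g \<in> H" "a < b"
  shows "L g a b = ereal (Lr L g a b)" "a \<le> Lr L g a b" "Lr L g a b \<le> b"
proof -
  have "L g a b \<in> ereal ` {a..b} \<union> {\<infinity>}" "L g a b \<noteq> \<infinity>"
    using assms unfolding invariant_ILF_def intrinsic_location_functional_def by auto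
  then obtain x where "L g a b = ereal x" "a \<le> x" "x \<le> b" by auto
  then show "L g a b = ereal (Lr L g a b)" "a \<le> Lr L g a b" "Lr L g a b \<le> b"
    by (auto simp: Lr_def)
qed

lemma Lr_shift:
  assumes "periodic_shift_class H" "invariant_ILF H L" "g \<in> H" "a < b"
  shows "Lr L g a b = Lr L (shift c g) (a - c) (b - c) + c"
proof -
  have sH: "shift c g \<in> H" using assms unfolding periodic_shift_class_def by auto
  have "L g a b = L (shift c g) (a - c) (b - c) + ereal c"
    using assms unfolding invariant_ILF_def intrinsic_location_functional_def by auto
  also have "L (shift c g) (a - c) (b - c) = ereal (Lr L (shift c g) (a - c) (b - c))"
    using Lr_basic[OF assms(2) sH] assms(4) by simp
  finally show ?thesis using Lr_basic[OF assms(2,3,4)] by simp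
qed

lemma Lr_sub:
  assumes "invariant_ILF H L" "g \<in> H" "a1 < b1" "a2 < b2" "a1 \<le> a2" "b2 \<le> b1"
    "a2 \<le> Lr L g a1 b1" "Lr L g a1 b1 \<le> b2"
  shows "Lr L g a2 b2 = Lr L g a1 b1"
proof -
  have "L g a1 b1 \<in> ereal ` {a2..b2}" using Lr_basic[OF assms(1,2,3)] assms(7,8) by auto
  then have "L g a2 b2 = L g a1 b1"
    using assms unfolding invariant_ILF_def intrinsic_location_functional_def by blast
  then show ?thesis by (simp add: Lr_def)
qed

lemma Lr_frac:
  assumes "invariant_ILF H L" "g \<in> H"
  shows "frac (Lr L g a (a + 1)) = frac (Lr L g 0 1)"
  using assms unfolding invariant_ILF_def Lr_def by auto


lemma card_int_diam:
  fixes F :: "int set" and c :: real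
  assumes "finite F" "\<And>a b. a \<in> F \<Longrightarrow> b \<in> F \<Longrightarrow> \<bar>real_of_int a - real_of_int b\<bar> < c" "0 \<le> c"
  shows "real (card F) \<le> c + 1"
proof (cases "F = {}")
  case True then show ?thesis using assms by simp
next
  case False
  have sub: "F \<subseteq> {Min F..Max F}" using assms(1) by auto
  have "card F \<le> card {Min F..Max F}" by (rule card_mono[OF _ sub]) simp
  also have "\<dots> = nat (Max F - Min F + 1)" by simp
  finally have "real (card F) \<le> real (nat (Max F - Min F + 1))" by simp
  moreover have "Min F \<le> Max F" using False assms(1) by (simp add: Min_le Max_in)
  then have "Max F - Min F + 1 \<ge> 0" by simp
  moreover have "real_of_int (Max F) - real_of_int (Min F) < c"
    using assms(2)[of "Max F" "Min F"] False assms(1) by auto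
  ultimately show ?thesis by linarith
qed

lemma count_lemma:
  fixes S :: "real \<Rightarrow> bool" and N :: int
  assumes per: "\<And>s. S (s + 1) = S s"
    and tau: "0 \<le> \<tau>" "\<tau> < 1"
    and nongap: "\<And>s. \<tau> \<le> s \<Longrightarrow> s < \<tau> + 1 \<Longrightarrow> \<not> (\<tau> < s \<and> s < \<tau> + G) \<Longrightarrow> S s \<Longrightarrow> \<alpha> < s \<and> s \<le> \<alpha> + h"
    and clus: "\<And>s1 s2. s1 < s2 \<Longrightarrow> s2 - s1 < \<delta> \<Longrightarrow> S s1 \<Longrightarrow> S s2 \<Longrightarrow> s2 - s1 < h"
    and pos: "0 < \<delta>" "0 < h" "0 < N" and mG: "G \<le> real m * \<delta>"
  shows "real (card {k \<in> {0..<N}. S (of_int k / of_int N)}) \<le> (real m + 1) * (h * of_int N + 1)"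
proof -
  define K0 where "K0 = \<lceil>\<tau> * of_int N\<rceil>"
  have tn: "0 \<le> \<tau> * of_int N" "\<tau> * of_int N \<le> of_int N" using tau pos by (simp_all add: mult_le_cancel_right1)
  have K0: "0 \<le> K0" "K0 \<le> N" using tn unfolding K0_def by (auto simp: ceiling_le_iff)
  define A where "A = {k \<in> {0..<N}. S (of_int k / of_int N)}"
  define B where "B = {k \<in> {K0..<K0+N}. S (of_int k / of_int N)}"
  define \<phi> where "\<phi> k = (if k < K0 then k + N else k)" for k :: int
  have perN: "S (of_int (k + N) / of_int N) = S (of_int k / of_int N)" for k
  proof -
    have "of_int (k + N) / of_int N = of_int k / (of_int N::real) + 1" using pos by (simp add: field_simps)
    then show ?thesis using per by simp
  qed
  have "bij_betw \<phi> A B"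
  proof (rule bij_betw_imageI)
    show "inj_on \<phi> A" unfolding inj_on_def \<phi>_def A_def using K0 by auto
    show "\<phi> ` A = B"
    proof
      show "\<phi> ` A \<subseteq> B" unfolding A_def B_def \<phi>_def using K0 perN by auto
      show "B \<subseteq> \<phi> ` A"
      proof
        fix k assume k: "k \<in> B"
        show "k \<in> \<phi> ` A"
        proof (cases "k < N")
          case True
          then have "k \<in> A" "\<phi> k = k" using k K0 unfolding A_def B_def \<phi>_def by auto
          then show ?thesis by force
        next
          case False
          then have "k - N \<in> A" "\<phi> (k - N) = k" using k K0 perN[of "k - N"] unfolding A_def B_def \<phi>_def by auto
          then show ?thesis by force
        qed
      qed
    qed
  qed
  then have cardAB: "card A = card B" by (rule bij_betw_same_card)
  define Ai where "Ai i = (if i < m then {k \<in> B. \<tau> + real i * \<delta> < of_int k / of_int N \<and> of_int k / of_int N \<le> \<tau> + (real i + 1) * \<delta>}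
      else {k \<in> B. \<not> (\<tau> < of_int k / of_int N \<and> of_int k / of_int N < \<tau> + G)})" for i :: nat
  have Bsub: "B \<subseteq> (\<Union>i\<in>{..m}. Ai i)"
  proof
    fix k assume k: "k \<in> B"
    let ?s = "of_int k / (of_int N :: real)"
    show "k \<in> (\<Union>i\<in>{..m}. Ai i)"
    proof (cases "\<tau> < ?s \<and> ?s < \<tau> + G")
      case False then have "k \<in> Ai m" using k unfolding Ai_def by simp
      then show ?thesis by blast
    next
      case True
      define j where "j = \<lceil>(?s - \<tau>) / \<delta>\<rceil>"
      have j1: "1 \<le> j" using True pos unfolding j_def by (simp add: le_ceiling_iff)
      have "?s - \<tau> < real m * \<delta>" using True mG by linarith
      then have "(?s - \<tau>) / \<delta> < real m" using pos by (simp add: divide_less_eq)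
      then have jm: "j \<le> int m" unfolding j_def by (simp add: ceiling_le_iff)
      have "real_of_int j - 1 < (?s - \<tau>) / \<delta>" "(?s - \<tau>) / \<delta> \<le> real_of_int j"
        unfolding j_def by linarith+
      then have a: "(real_of_int j - 1) * \<delta> < ?s - \<tau>" "?s - \<tau> \<le> real_of_int j * \<delta>"
        using pos by (simp_all add: field_simps)
      define i where "i = nat (j - 1)"
      have ij: "real i = real_of_int j - 1" "i < m" using j1 jm unfolding i_def by auto
      have "real_of_int j = real i + 1" using ij by simp
      then have jd: "real_of_int j * \<delta> = real i * \<delta> + \<delta>" by (simp add: algebra_simps)
      have "\<tau> + real i * \<delta> < ?s" "?s \<le> \<tau> + (real i + 1) * \<delta>" using a jd by (simp_all add: algebra_simps)
      then have "k \<in> Ai i" using k ij unfolding Ai_def by simp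
      then show ?thesis using ij by auto
    qed
  qed
  have finB: "finite B" unfolding B_def by (rule finite_subset[of _ "{K0..<K0+N}"]) auto
  have rng: "\<tau> \<le> of_int k / of_int N \<and> of_int k / of_int N < \<tau> + 1" if "k \<in> B" for k
  proof -
    have k: "K0 \<le> k" "k < K0 + N" using that unfolding B_def by auto
    have "\<tau> * of_int N \<le> of_int K0" unfolding K0_def by simp
    moreover have "of_int K0 < \<tau> * of_int N + 1" unfolding K0_def by linarith
    ultimately have "\<tau> * of_int N \<le> of_int k" "of_int k < \<tau> * of_int N + of_int N" using k by linarith+
    then show ?thesis using pos by (simp add: divide_less_eq le_divide_eq algebra_simps)
  qed
  have cardAi: "real (card (Ai i)) \<le> h * of_int N + 1" if "i \<le> m" for i
  proof (rule card_int_diam)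
    show "finite (Ai i)" using finB unfolding Ai_def by auto
    show "0 \<le> h * of_int N" using pos by simp
    fix a b assume ab: "a \<in> Ai i" "b \<in> Ai i"
    have Sab: "S (of_int a / of_int N)" "S (of_int b / of_int N)" using ab unfolding Ai_def B_def
      by (auto split: if_splits)
    have d: "\<bar>of_int a / of_int N - of_int b / (of_int N::real)\<bar> < h"
    proof (cases "i < m")
      case True
      then have r: "\<tau> + real i * \<delta> < of_int a / of_int N" "of_int a / of_int N \<le> \<tau> + (real i + 1) * \<delta>"
        "\<tau> + real i * \<delta> < of_int b / of_int N" "of_int b / of_int N \<le> \<tau> + (real i + 1) * \<delta>"
        using ab unfolding Ai_def by auto
      show ?thesis
      proof (cases "of_int a / of_int N < (of_int b / of_int N :: real)")
        case True
        then show ?thesis using clus[OF True _ Sab] r by (auto simp: algebra_simps)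
      next
        case F: False
        show ?thesis
        proof (cases "of_int a / of_int N = (of_int b / of_int N :: real)")
          case True then show ?thesis using pos by simp
        next
          case False
          then have lt: "of_int b / of_int N < (of_int a / of_int N :: real)" using F by linarith
          then show ?thesis using clus[OF lt _ Sab(2) Sab(1)] r by (auto simp: algebra_simps)
        qed
      qed
    next
      case False
      then have "\<alpha> < of_int a / of_int N \<and> of_int a / of_int N \<le> \<alpha> + h"
        "\<alpha> < of_int b / of_int N \<and> of_int b / of_int N \<le> \<alpha> + h"
      proof -
        have "a \<in> B" "\<not> (\<tau> < of_int a / of_int N \<and> of_int a / of_int N < \<tau> + G)"
          "b \<in> B" "\<not> (\<tau> < of_int b / of_int N \<and> of_int b / of_int N < \<tau> + G)"
          using ab False unfolding Ai_def by auto
        then show "\<alpha> < of_int a / of_int N \<and> of_int a / of_int N \<le> \<alpha> + h"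
          "\<alpha> < of_int b / of_int N \<and> of_int b / of_int N \<le> \<alpha> + h"
          using nongap rng Sab by blast+
      qed
      then show ?thesis by auto
    qed
    have "\<bar>of_int a - of_int b\<bar> = \<bar>of_int a / of_int N - of_int b / (of_int N::real)\<bar> * of_int N"
      using pos by (simp add: field_simps abs_mult)
    also have "\<dots> < h * of_int N" using d pos by simp
    finally show "\<bar>real_of_int a - real_of_int b\<bar> < h * of_int N" .
  qed
  have "card B \<le> card (\<Union>i\<in>{..m}. Ai i)" by (rule card_mono[OF _ Bsub]) (auto simp: Ai_def finB)
  also have "\<dots> \<le> (\<Sum>i\<in>{..m}. card (Ai i))" by (rule card_UN_le) simp
  finally have "real (card B) \<le> (\<Sum>i\<in>{..m}. real (card (Ai i)))" by (simp flip: of_nat_sum)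
  also have "\<dots> \<le> (\<Sum>i\<in>{..m}. h * of_int N + 1)" by (rule sum_mono) (use cardAi in auto)
  also have "\<dots> = (real m + 1) * (h * of_int N + 1)" by simp
  finally show ?thesis using cardAB unfolding A_def B_def by simp
qed


lemma frac_eq_int:
  fixes x y :: real
  assumes "frac x = frac y" shows "\<exists>k::int. x = y + of_int k"
proof -
  have "x = of_int \<lfloor>x\<rfloor> + frac x" "y = of_int \<lfloor>y\<rfloor> + frac y" by (simp_all add: frac_def)
  then have "x = y + of_int (\<lfloor>x\<rfloor> - \<lfloor>y\<rfloor>)" using assms by simp
  then show ?thesis by blast
qed

lemma int_between:
  fixes k :: int
  assumes "a < real_of_int k" "real_of_int k < a + 2" "a = 0"
  shows "k = 1"
  using assms by simp

context
  fixes H :: "(real \<Rightarrow> real) set" and L :: "(real \<Rightarrow> real) \<Rightarrow> real \<Rightarrow> real \<Rightarrow> ereal" and g :: "real \<Rightarrow> real"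
    and T t h :: real
  assumes psc: "periodic_shift_class H" and inv: "invariant_ILF H L" and gH: "g \<in> H"
    and tpos: "0 < t" and hpos: "0 < h" and tT: "t + h < T" and T1: "T \<le> 1"
begin

definition Sg where "Sg s \<longleftrightarrow> t \<le> Lr L g s (s + T) - s \<and> Lr L g s (s + T) - s < t + h"

lemma Tpos: "0 < T" using tpos hpos tT by linarith

lemma Sg_per: "Sg (s + 1) = Sg s"
proof -
  have "Lr L g (s + 1) (s + 1 + T) = Lr L (shift 1 g) (s + 1 - 1) (s + 1 + T - 1) + 1"
    using Lr_shift[OF psc inv gH, of "s+1" "s+1+T" 1] Tpos by simp
  also have "shift 1 g = g" using shift_int[OF psc gH, of 1] by simp
  finally have "Lr L g (s + 1) (s + 1 + T) = Lr L g s (s + T) + 1" by (simp add: algebra_simps)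
  then show ?thesis unfolding Sg_def by (simp add: algebra_simps)
qed

definition tau where "tau = frac (Lr L g 0 1)"

lemma Pwin:
  assumes "s \<le> p" "p \<le> s + T" "frac p = tau"
  shows "frac (Lr L g s (s + T)) = tau"
proof (cases "T = 1")
  case True
  then show ?thesis using Lr_frac[OF inv gH, of s] unfolding tau_def by simp
next
  case False
  then have T1': "T < 1" using T1 by simp
  define a where "a = s - (1 - T) / 2"
  define l1 where "l1 = Lr L g a (a + 1)"
  have l1: "a \<le> l1" "l1 \<le> a + 1" using Lr_basic[OF inv gH, of a "a+1"] unfolding l1_def by auto
  have fl1: "frac l1 = tau" using Lr_frac[OF inv gH, of a] unfolding l1_def tau_def by simp
  obtain k :: int where k: "l1 = p + of_int k" using frac_eq_int[of l1 p] fl1 assms(3) by auto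
  have h2: "0 < (1 - T) / 2" "(1 - T) / 2 < 1 - T" using T1' by auto
  have "a < p" "p < a + 1" using assms h2 unfolding a_def by linarith+
  then have "-1 < real_of_int k" "real_of_int k < 1" using l1 k by auto
  then have "k = 0" by linarith
  then have lp: "l1 = p" using k by simp
  have f1: "a < a + 1" "s < s + T" "a \<le> s" "s + T \<le> a + 1" using Tpos h2 unfolding a_def by linarith+
  have f2: "s \<le> Lr L g a (a + 1)" "Lr L g a (a + 1) \<le> s + T" using lp assms unfolding l1_def by auto
  have "Lr L g s (s + T) = l1"
    unfolding l1_def by (rule Lr_sub[OF inv gH f1 f2])
  then show ?thesis using lp assms by simp
qed

lemma tau_rng: "0 \<le> tau" "tau < 1" unfolding tau_def by (simp_all add: frac_lt_1)

lemma Sg_nongap: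
  assumes "tau \<le> s" "s < tau + 1" "\<not> (tau < s \<and> s < tau + (1 - T))" "Sg s"
  shows "tau + 1 - t - h < s \<and> s \<le> tau + 1 - t + h - h"
proof -
  define l where "l = Lr L g s (s + T)"
  have fl: "frac l = tau"
  proof (cases "s = tau")
    case True
    show ?thesis unfolding l_def by (rule Pwin[of s tau]) (use True Tpos tau_def in auto)
  next
    case False
    then have "tau + (1 - T) \<le> s" using assms by auto
    then show ?thesis unfolding l_def
      by (intro Pwin[of s "tau + 1"]) (use assms(2) tau_rng frac_add_of_int_right[of tau 1] in auto)
  qed
  have fr: "frac (tau + 1) = tau" using frac_add_of_int_right[of tau 1] tau_rng by simp
  obtain k :: int where k: "l = tau + 1 + of_int k" using frac_eq_int[of l "tau + 1"] fl fr by auto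
  have lr: "s + t \<le> l" "l < s + t + h" using assms(4) unfolding Sg_def l_def by auto
  have "-1 < real_of_int k" "real_of_int k < 1" using lr k assms tpos tT T1 by auto
  then have "k = 0" by linarith
  then show ?thesis using k lr by auto
qed

lemma Sg_clus:
  assumes "s1 < s2" "s2 - s1 < t" "s2 - s1 < T - t - h" "Sg s1" "Sg s2"
  shows "s2 - s1 < h"
proof -
  define x where "x = Lr L g s1 (s2 + T)"
  have x: "s1 \<le> x" "x \<le> s2 + T" using Lr_basic[OF inv gH, of s1 "s2 + T"] assms(1) Tpos unfolding x_def by auto
  have l1: "x \<le> s1 + T \<Longrightarrow> Lr L g s1 (s1 + T) = x" unfolding x_def
    by (rule Lr_sub[OF inv gH]) (use assms(1) Tpos x x_def in auto)
  have l2: "s2 \<le> x \<Longrightarrow> Lr L g s2 (s2 + T) = x" unfolding x_def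
    by (rule Lr_sub[OF inv gH]) (use assms(1) Tpos x x_def in auto)
  have S1: "t \<le> Lr L g s1 (s1 + T) - s1" "Lr L g s1 (s1 + T) - s1 < t + h"
   and S2: "t \<le> Lr L g s2 (s2 + T) - s2" "Lr L g s2 (s2 + T) - s2 < t + h"
    using assms(4,5) unfolding Sg_def by auto
  consider "x < s2" | "s1 + T < x" | "s2 \<le> x \<and> x \<le> s1 + T" by linarith
  then show ?thesis
  proof cases
    case 1
    then have "x \<le> s1 + T" using assms Tpos tpos tT hpos by linarith
    then show ?thesis using l1 S1 1 assms by auto
  next
    case 2
    then have "s2 \<le> x" using assms tT hpos by linarith
    then show ?thesis using l2 S2 2 assms by auto
  next
    case 3
    then show ?thesis using l1 l2 S1 S2 by auto
  qed
qed

lemma det_count: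
  assumes "0 < \<delta>" "\<delta> \<le> t" "\<delta> \<le> T - t - h" "1 - T \<le> real m * \<delta>" "0 < N"
  shows "real (card {k \<in> {0..<N}. Sg (of_int k / of_int N)}) \<le> (real m + 1) * (h * of_int N + 1)"
  by (rule count_lemma[where \<tau>=tau and G="1-T" and \<alpha>="tau + 1 - t - h" and \<delta>=\<delta>])
     (use assms Sg_per tau_rng Sg_nongap Sg_clus hpos in auto)

end


lemma space_path_space[simp]: "space path_space = UNIV"
  unfolding path_space_def by (simp add: space_PiM)

lemma shift_meas:
  assumes "X \<in> measurable M path_space"
  shows "(\<lambda>\<omega>. shift s (X \<omega>)) \<in> measurable M path_space"
proof -
  have "(\<lambda>\<omega> x. X \<omega> (x + s)) \<in> measurable M (Pi\<^sub>M UNIV (\<lambda>_. borel))"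
  proof (rule measurable_PiM_single')
    fix i :: real
    show "(\<lambda>\<omega>. X \<omega> (i + s)) \<in> borel_measurable M"
      using measurable_compose[OF assms[unfolded path_space_def] measurable_component_singleton[of "i + s" UNIV "\<lambda>_. borel"]]
      by simp
  qed simp
  then show ?thesis unfolding shift_def path_space_def by simp
qed

context
  fixes H :: "(real \<Rightarrow> real) set" and L :: "(real \<Rightarrow> real) \<Rightarrow> real \<Rightarrow> real \<Rightarrow> ereal"
    and M :: "'w measure" and X :: "'w \<Rightarrow> real \<Rightarrow> real" and T :: real
  assumes psc: "periodic_shift_class H" and inv: "invariant_ILF H L"
    and psp: "periodic_stationary_process H M X" and Tpos: "0 < T"
begin

lemma ps: "prob_space M" using psp unfolding periodic_stationary_process_def by auto
lemma Xm: "X \<in> measurable M path_space" using psp unfolding periodic_stationary_process_def by auto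
lemma XH: "\<omega> \<in> space M \<Longrightarrow> X \<omega> \<in> H" using psp unfolding periodic_stationary_process_def by auto
lemma stat: "distr M path_space (\<lambda>\<omega>. shift c (X \<omega>)) = distr M path_space X"
  using psp unfolding periodic_stationary_process_def by auto

lemma ev:
  assumes B: "B \<in> sets borel"
  shows "{\<omega> \<in> space M. Lr L (X \<omega>) s (s + T) - s \<in> B} \<in> sets M"
    "emeasure M {\<omega> \<in> space M. Lr L (X \<omega>) s (s + T) - s \<in> B} = emeasure M {\<omega> \<in> space M. Lr L (X \<omega>) 0 T \<in> B}"
proof -
  define \<Psi> where "\<Psi> g = Lr L g 0 T" for g
  have "(\<lambda>g. L g 0 T) \<in> borel_measurable (H_space H)"
    using inv Tpos unfolding invariant_ILF_def intrinsic_location_functional_def by auto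
  then have "\<Psi> \<in> borel_measurable (H_space H)" unfolding \<Psi>_def Lr_def by measurable
  then have "\<Psi> -` B \<inter> space (H_space H) \<in> sets (H_space H)" using B by (rule measurable_sets)
  moreover have "space (H_space H) = H" unfolding H_space_def by (simp add: space_restrict_space)
  ultimately have "\<Psi> -` B \<inter> H \<in> (\<inter>) H ` sets path_space"
    unfolding H_space_def by (simp add: sets_restrict_space)
  then obtain C where C: "C \<in> sets path_space" "\<Psi> -` B \<inter> H = H \<inter> C" by auto
  have CH: "g \<in> H \<Longrightarrow> (\<Psi> g \<in> B) = (g \<in> C)" for g using C(2) by blast
  have sh: "shift s (X \<omega>) \<in> H" if "\<omega> \<in> space M" for \<omega>
    using psc XH[OF that] unfolding periodic_shift_class_def by auto
  have e1: "{\<omega> \<in> space M. Lr L (X \<omega>) s (s + T) - s \<in> B} = (\<lambda>\<omega>. shift s (X \<omega>)) -` C \<inter> space M"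
  proof -
    have "Lr L (X \<omega>) s (s + T) - s = \<Psi> (shift s (X \<omega>))" if "\<omega> \<in> space M" for \<omega>
      using Lr_shift[OF psc inv XH[OF that], of s "s + T" s] Tpos unfolding \<Psi>_def by simp
    then show ?thesis using CH sh by auto
  qed
  have e2: "{\<omega> \<in> space M. Lr L (X \<omega>) 0 T \<in> B} = X -` C \<inter> space M"
    using CH XH unfolding \<Psi>_def by auto
  show "{\<omega> \<in> space M. Lr L (X \<omega>) s (s + T) - s \<in> B} \<in> sets M"
    unfolding e1 using shift_meas[OF Xm] C(1) by (rule measurable_sets)
  have "emeasure M ((\<lambda>\<omega>. shift s (X \<omega>)) -` C \<inter> space M) = emeasure (distr M path_space (\<lambda>\<omega>. shift s (X \<omega>))) C"
    using shift_meas[OF Xm] C(1) by (simp add: emeasure_distr)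
  also have "\<dots> = emeasure (distr M path_space X) C" by (simp add: stat)
  also have "\<dots> = emeasure M (X -` C \<inter> space M)" using Xm C(1) by (simp add: emeasure_distr)
  finally show "emeasure M {\<omega> \<in> space M. Lr L (X \<omega>) s (s + T) - s \<in> B} = emeasure M {\<omega> \<in> space M. Lr L (X \<omega>) 0 T \<in> B}"
    using e1 e2 by simp
qed

lemma upper:
  assumes tpos: "0 < t" and hpos: "0 < h" and tT: "t + h < T" and T1: "T \<le> 1"
    and d: "0 < \<delta>" "\<delta> \<le> t" "\<delta> \<le> T - t - h" "1 - T \<le> real m * \<delta>" and N: "0 < N"
  shows "measure M {\<omega> \<in> space M. Lr L (X \<omega>) 0 T \<in> {t..<t+h}} * of_int N \<le> (real m + 1) * (h * of_int N + 1)"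
proof -
  interpret prob_space M by (rule ps)
  define E where "E k = {\<omega> \<in> space M. Lr L (X \<omega>) (of_int k / of_int N) (of_int k / of_int N + T) - of_int k / of_int N \<in> {t..<t+h}}" for k :: int
  define E0 where "E0 = {\<omega> \<in> space M. Lr L (X \<omega>) 0 T \<in> {t..<t+h}}"
  have Es: "E k \<in> sets M" for k unfolding E_def by (rule ev) simp
  have Ee: "emeasure M (E k) = emeasure M E0" for k unfolding E_def E0_def by (rule ev) simp
  define C where "C = (real m + 1) * (h * of_int N + 1)"
  have C0: "0 \<le> C" unfolding C_def using hpos N by simp
  have pt: "(\<Sum>k\<in>{0..<N}. indicator (E k) \<omega>) \<le> ennreal C" if "\<omega> \<in> space M" for \<omega>
  proof -
    have "(\<Sum>k\<in>{0..<N}. indicator (E k) \<omega> :: ennreal) = of_nat (card {k \<in> {0..<N}. \<omega> \<in> E k})"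
    proof -
      have "(\<Sum>k\<in>{0..<N}. indicator (E k) \<omega> :: ennreal) = (\<Sum>k\<in>{0..<N}. indicator {k. \<omega> \<in> E k} k)"
        by (simp add: indicator_def)
      also have "\<dots> = of_nat (card ({0..<N} \<inter> {k. \<omega> \<in> E k}))"
        using sum.inter_restrict[of "{0..<N}" "\<lambda>_. 1::ennreal" "{k. \<omega> \<in> E k}"] by (simp add: indicator_def)
      finally show ?thesis by (simp add: Int_def conj_commute)
    qed
    also have "{k \<in> {0..<N}. \<omega> \<in> E k} = {k \<in> {0..<N}. Sg L (X \<omega>) T t h (of_int k / of_int N)}"
      using that Sg_def[OF psc inv XH[OF that] tpos hpos tT T1] unfolding E_def by auto
    also have "real (card \<dots>) \<le> C"
      unfolding C_def by (rule det_count[OF psc inv XH[OF that] tpos hpos tT T1 d N])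
    then have "of_nat (card {k \<in> {0..<N}. Sg L (X \<omega>) T t h (of_int k / of_int N)}) \<le> ennreal C"
      by (metis ennreal_of_nat_eq_real_of_nat ennreal_leI)
    finally show ?thesis .
  qed
  have nN: "of_nat (nat N) = ennreal (real_of_int N)" using N by (simp add: ennreal_of_nat_eq_real_of_nat)
  have "ennreal (real_of_int N) * emeasure M E0 = (\<Sum>k\<in>{0..<N}. emeasure M (E k))"
    using N by (simp add: Ee nN[symmetric])
  also have "\<dots> = (\<Sum>k\<in>{0..<N}. \<integral>\<^sup>+\<omega>. indicator (E k) \<omega> \<partial>M)" using Es by simp
  also have "\<dots> = \<integral>\<^sup>+\<omega>. (\<Sum>k\<in>{0..<N}. indicator (E k) \<omega>) \<partial>M"
    by (rule nn_integral_sum[symmetric]) (use Es in auto)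
  also have "\<dots> \<le> \<integral>\<^sup>+\<omega>. ennreal C \<partial>M" by (rule nn_integral_mono) (use pt in auto)
  also have "\<dots> = ennreal C" by (simp add: emeasure_space_1)
  finally have "ennreal (real_of_int N) * emeasure M E0 \<le> ennreal C" .
  then have "ennreal (of_int N * measure M E0) \<le> ennreal C"
    using N by (simp add: emeasure_eq_measure ennreal_mult ennreal_of_nat_eq_real_of_nat)
  then have "of_int N * measure M E0 \<le> C" using C0 by (simp add: ennreal_le_iff)
  then show ?thesis unfolding E0_def C_def by (simp add: mult.commute)
qed

end

lemma part1:
  fixes H :: "(real \<Rightarrow> real) set" and L :: "(real \<Rightarrow> real) \<Rightarrow> real \<Rightarrow> real \<Rightarrow> ereal"
    and M :: "'w measure" and X :: "'w \<Rightarrow> real \<Rightarrow> real"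
  assumes psc: "periodic_shift_class H" and inv: "invariant_ILF H L"
    and psp: "periodic_stationary_process H M X" and Tpos: "0 < T" and T1: "T \<le> 1"
    and cd: "cadlag_density_on T M (\<lambda>\<omega>. L (X \<omega>) 0 T) f" and t: "t \<in> {0<..<T}"
  shows "f t \<le> density_bound T t"
proof (rule ccontr)
  interpret prob_space M by (rule ps[OF psc inv psp Tpos])
  assume "\<not> f t \<le> density_bound T t"
  then have ft: "density_bound T t < f t" by simp
  define G where "G = 1 - T"
  have G0: "0 \<le> G" using T1 unfolding G_def by simp
  have tp: "0 < t" "t < T" using t by auto
  define D' where "D' = real_of_int (max \<lfloor>G / t\<rfloor> \<lfloor>G / (T - t)\<rfloor> + 1)"
  have DD: "density_bound T t = D' + 1" unfolding density_bound_def D'_def G_def by simp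
  have f1: "0 \<le> \<lfloor>G / t\<rfloor>" using G0 tp by simp
  have g1: "G / t < D'" unfolding D'_def by linarith
  have g2: "G / (T - t) < D'" unfolding D'_def by linarith
  have D'pos: "1 \<le> D'" using f1 unfolding D'_def by linarith
  have gt: "G \<le> D' * t" using g1 tp by (simp add: divide_less_eq mult.commute)
  have gTt: "G < D' * (T - t)" using g2 tp by (simp add: divide_less_eq mult.commute)
  define h0 where "h0 = T - t - G / D'"
  have h0: "0 < h0" using gTt D'pos unfolding h0_def by (simp add: divide_less_eq mult.commute)
  define B0 where "B0 = (f t + density_bound T t) / 2"
  have B0: "density_bound T t < B0" "B0 < f t" using ft unfolding B0_def by auto
  have "continuous (at_right t) f" using cd t unfolding cadlag_density_on_def by auto
  then have "(f \<longlongrightarrow> f t) (at_right t)" by (simp add: continuous_within)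
  then have "eventually (\<lambda>x. B0 < f x) (at_right t)" using B0 by (simp add: order_tendstoD)
  then obtain b where b: "t < b" "\<And>y. t < y \<Longrightarrow> y < b \<Longrightarrow> B0 < f y"
    unfolding eventually_at_right_field by auto
  define q where "q = min (b - t) h0"
  define h where "h = q / 2"
  have q: "q \<le> b - t" "q \<le> h0" "0 < q" using b h0 unfolding q_def by auto
  have h1: "0 < h" using q unfolding h_def by simp
  have h2: "h < h0" using q unfolding h_def by simp
  have h3: "t + h < b" using q unfolding h_def by simp
  note h = h1 h2 h3
  have "0 \<le> G / D'" using G0 D'pos by simp
  then have tT: "t + h < T" using h unfolding h0_def by linarith
  have fB: "B0 \<le> f y" if "y \<in> {t..<t+h}" for y
    using that b(2)[of y] B0 h by (cases "y = t") auto
  define \<delta> where "\<delta> = min t (T - t - h)"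
  have d: "0 < \<delta>" "\<delta> \<le> t" "\<delta> \<le> T - t - h" using tp tT unfolding \<delta>_def by auto
  have gd: "G \<le> D' * \<delta>"
  proof -
    have "G / D' \<le> T - t - h" using h unfolding h0_def by simp
    then have "G \<le> D' * (T - t - h)" using D'pos by (simp add: divide_le_eq mult.commute)
    then show ?thesis using gt unfolding \<delta>_def by (simp add: min_def)
  qed
  define m where "m = nat \<lceil>G / \<delta>\<rceil>"
  have "0 \<le> G / \<delta>" using G0 d by simp
  then have m0: "0 \<le> \<lceil>G / \<delta>\<rceil>" by linarith
  have mr: "real m = of_int \<lceil>G / \<delta>\<rceil>" unfolding m_def using m0 by simp
  have mG: "1 - T \<le> real m * \<delta>"
  proof -
    have "G / \<delta> \<le> real m" unfolding mr by linarith
    then show ?thesis using d unfolding G_def by (simp add: divide_le_eq)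
  qed
  have mD: "real m \<le> D'"
  proof -
    have "G / \<delta> \<le> D'" using gd d by (simp add: divide_le_eq mult.commute)
    then have "\<lceil>G / \<delta>\<rceil> \<le> max \<lfloor>G / t\<rfloor> \<lfloor>G / (T - t)\<rfloor> + 1"
      unfolding D'_def by (simp add: ceiling_le_iff)
    then show ?thesis unfolding mr D'_def by linarith
  qed
  define E0 where "E0 = {\<omega> \<in> space M. Lr L (X \<omega>) 0 T \<in> {t..<t+h}}"
  have up: "measure M E0 * of_int N \<le> (real m + 1) * (h * of_int N + 1)" if "0 < N" for N
    unfolding E0_def by (rule upper[OF psc inv psp Tpos tp(1) h(1) tT T1 d mG that])
  have up2: "measure M E0 \<le> (real m + 1) * h"
  proof (rule ccontr)
    assume "\<not> ?thesis"
    then have pos: "0 < measure M E0 - (real m + 1) * h" by simp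
    obtain n :: nat where n: "(real m + 1) / (measure M E0 - (real m + 1) * h) < real n"
      using reals_Archimedean2 by blast
    have "0 < (real m + 1) / (measure M E0 - (real m + 1) * h)" using pos by simp
    then have npos: "0 < n" using n by (metis gr0I less_le_not_le of_nat_0)
    have "(real m + 1) < real n * (measure M E0 - (real m + 1) * h)"
      using n pos by (simp add: divide_less_eq mult.commute)
    moreover have "measure M E0 * real n \<le> (real m + 1) * (h * real n + 1)"
      using up[of "int n"] npos by simp
    ultimately show False by (simp add: algebra_simps)
  qed
  have Asub: "{t..<t+h} \<subseteq> {0<..<T}" using tp tT by auto
  have eqset: "{\<omega> \<in> space M. L (X \<omega>) 0 T \<in> ereal ` {t..<t+h}} = E0"
    unfolding E0_def using Lr_basic(1)[OF inv XH[OF psc inv psp Tpos] Tpos] by auto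
  have "emeasure M E0 = (\<integral>\<^sup>+x\<in>{t..<t+h}. ennreal (f x) \<partial>lborel)"
    using cd Asub unfolding cadlag_density_on_def eqset[symmetric] by auto
  also have "\<dots> \<ge> (\<integral>\<^sup>+x. ennreal B0 * indicator {t..<t+h} x \<partial>lborel)"
    by (rule nn_integral_mono) (use fB in \<open>auto split: split_indicator intro: ennreal_leI\<close>)
  moreover have "(\<integral>\<^sup>+x. ennreal B0 * indicator {t..<t+h} x \<partial>lborel) = ennreal (B0 * h)"
  proof -
    have "0 \<le> B0" using B0 DD D'pos by linarith
    then show ?thesis using h by (simp add: nn_integral_cmult_indicator ennreal_mult)
  qed
  ultimately have "ennreal (B0 * h) \<le> ennreal (measure M E0)"
    by (simp add: emeasure_eq_measure)
  then have "B0 * h \<le> measure M E0" by (simp add: ennreal_le_iff2) (use measure_nonneg[of M E0] in linarith)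
  then have "B0 * h \<le> density_bound T t * h"
    using up2 mD DD h by (smt (verit) mult_right_mono)
  then show False using B0 h by simp
qed


lemma borel_measurable_frac[measurable]: "(frac :: real \<Rightarrow> real) \<in> borel_measurable borel"
  unfolding frac_def by measurable

definition g0 :: "real \<Rightarrow> real" where "g0 x = cos (2 * pi * x)"
definition H0 :: "(real \<Rightarrow> real) set" where "H0 = range (\<lambda>c. shift c g0)"
definition clip :: "real \<Rightarrow> real" where "clip y = max (-1) (min 1 y)"
definition Phi :: "(real \<Rightarrow> real) \<Rightarrow> real" where
  "Phi g = (if g (1/4) \<le> 0 then arccos (clip (g 0)) / (2 * pi) else 1 - arccos (clip (g 0)) / (2 * pi))"

lemma cos_frac: "cos (2 * pi * frac c) = cos (2 * pi * c)" "sin (2 * pi * frac c) = sin (2 * pi * c)"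
proof -
  have e: "2 * pi * c = 2 * pi * frac c + (2 * pi) * of_int \<lfloor>c\<rfloor>" by (simp add: frac_def algebra_simps)
  show "cos (2 * pi * frac c) = cos (2 * pi * c)" unfolding e by (simp add: cos_add)
  show "sin (2 * pi * frac c) = sin (2 * pi * c)" unfolding e by (simp add: sin_add)
qed

lemma Phi_shift: "Phi (shift c g0) = frac c"
proof -
  define \<theta> where "\<theta> = 2 * pi * frac c"
  have th: "0 \<le> \<theta>" "\<theta> < 2 * pi" unfolding \<theta>_def by (simp_all add: frac_lt_1)
  have g00: "shift c g0 0 = cos \<theta>" unfolding \<theta>_def shift_def g0_def by (simp add: cos_frac)
  have g14: "shift c g0 (1/4) = - sin \<theta>"
  proof -
    have "shift c g0 (1/4) = cos (2 * pi * c + pi / 2)" unfolding shift_def g0_def by (simp add: algebra_simps)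
    also have "\<dots> = - sin (2 * pi * c)" by (simp add: cos_add)
    finally show ?thesis unfolding \<theta>_def by (simp add: cos_frac)
  qed
  have cl: "clip (cos \<theta>) = cos \<theta>" unfolding clip_def by simp
  show ?thesis
  proof (cases "\<theta> \<le> pi")
    case True
    then have "0 \<le> sin \<theta>" using th by (simp add: sin_ge_zero)
    then show ?thesis unfolding Phi_def g00 g14 cl using arccos_cos[OF th(1) True] unfolding \<theta>_def by simp
  next
    case False
    then have "sin \<theta> < 0" using th by (simp add: sin_lt_zero)
    moreover have "arccos (cos \<theta>) = 2 * pi - \<theta>"
    proof -
      have "cos \<theta> = cos (2 * pi - \<theta>)" by (simp add: cos_diff)
      then show ?thesis using arccos_cos[of "2 * pi - \<theta>"] th False by simp
    qed
    ultimately show ?thesis unfolding Phi_def g00 g14 cl unfolding \<theta>_def by (simp add: field_simps)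
  qed
qed

lemma clip_cont: "continuous_on UNIV (\<lambda>y. arccos (clip y))"
proof -
  have "continuous_on UNIV clip" unfolding clip_def by (intro continuous_intros)
  moreover have "clip ` UNIV \<subseteq> {-1..1}" unfolding clip_def by auto
  ultimately show ?thesis using continuous_on_compose[of UNIV clip arccos] continuous_on_arccos'
    by (simp add: continuous_on_subset o_def)
qed

lemma Phi_meas: "Phi \<in> borel_measurable path_space"
proof -
  have ac: "(\<lambda>y. arccos (clip y)) \<in> borel_measurable borel"
    using clip_cont by (rule borel_measurable_continuous_onI)
  have e0: "(\<lambda>g. g 0) \<in> borel_measurable path_space" unfolding path_space_def by simp
  have e1: "(\<lambda>g. g (1/4)) \<in> borel_measurable path_space" unfolding path_space_def by simp
  have "(\<lambda>g. arccos (clip (g 0))) \<in> borel_measurable path_space"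
    using measurable_compose[OF e0 ac] by simp
  then show ?thesis unfolding Phi_def using e1 by measurable
qed

lemma H0_psc: "periodic_shift_class H0"
  unfolding periodic_shift_class_def H0_def
proof (intro conjI ballI allI)
  fix g x assume "g \<in> range (\<lambda>c. shift c g0)"
  then obtain c where g: "g = shift c g0" by auto
  have "2 * pi * (x + 1 + c) = 2 * pi * (x + c) + 2 * pi" by (simp add: algebra_simps)
  then show "g (x + 1) = g x" unfolding g shift_def g0_def by simp
next
  fix g c' assume "g \<in> range (\<lambda>c. shift c g0)"
  then obtain c where g: "g = shift c g0" by auto
  show "shift c' g \<in> range (\<lambda>c. shift c g0)" unfolding g shift_shift by auto
qed


locale design =
  fixes K :: nat and pos :: "nat \<Rightarrow> real" and lv :: "nat \<Rightarrow> nat" and j0 :: nat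
  assumes inj: "inj_on lv {..<K}" and j0: "j0 < K" and top: "\<And>j. j < K \<Longrightarrow> lv j \<le> lv j0"
begin

definition Fr where "Fr c a j = frac (pos j - c - a)"
definition pres where "pres c a b j \<longleftrightarrow> a + Fr c a j \<le> b"
definition istop where "istop c a b j \<longleftrightarrow> j < K \<and> pres c a b j \<and> (\<forall>j'\<in>{..<K}. pres c a b j' \<longrightarrow> lv j' \<le> lv j)"
definition Lf where "Lf c a b = a + (\<Sum>j<K. if istop c a b j then Fr c a j else 0)"
definition Lc where "Lc g a b = ereal (Lf (Phi g) a b)"

lemma istop_unique: assumes "istop c a b j" "istop c a b j'" shows "j = j'"
proof -
  have "lv j' \<le> lv j" "lv j \<le> lv j'" "j < K" "j' < K" using assms unfolding istop_def by auto
  then show ?thesis using inj unfolding inj_on_def by (metis antisym lessThan_iff)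
qed

lemma Lf_top: assumes "istop c a b j" shows "Lf c a b = a + Fr c a j"
proof -
  have jK: "j < K" using assms unfolding istop_def by simp
  have "(\<Sum>j'<K. if istop c a b j' then Fr c a j' else 0) = (\<Sum>j'<K. if j' = j then Fr c a j else 0)"
  proof (rule sum.cong)
    fix j' assume "j' \<in> {..<K}"
    show "(if istop c a b j' then Fr c a j' else 0) = (if j' = j then Fr c a j else 0)"
    proof (cases "j' = j")
      case True then show ?thesis using assms by simp
    next
      case False then show ?thesis using istop_unique[OF assms, of j'] by auto
    qed
  qed simp
  also have "\<dots> = Fr c a j" using jK by simp
  finally show ?thesis unfolding Lf_def by simp
qed

lemma Lf_none: assumes "\<And>j. \<not> istop c a b j" shows "Lf c a b = a"
  unfolding Lf_def using assms by simp

lemma ex_top: assumes "j < K" "pres c a b j" shows "\<exists>j. istop c a b j"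
proof -
  define S where "S = {j \<in> {..<K}. pres c a b j}"
  have S: "finite S" "S \<noteq> {}" using assms unfolding S_def by auto
  have "Max (lv ` S) \<in> lv ` S" using S by simp
  then obtain jm where jm: "jm \<in> S" "lv jm = Max (lv ` S)" by auto
  have "istop c a b jm" unfolding istop_def
  proof (intro conjI ballI impI)
    show "jm < K" "pres c a b jm" using jm(1) unfolding S_def by auto
    fix j' assume "j' \<in> {..<K}" "pres c a b j'"
    then have "j' \<in> S" unfolding S_def by simp
    then show "lv j' \<le> lv jm" unfolding jm(2) using S by simp
  qed
  then show ?thesis by blast
qed

lemma fr_eq: "a + Fr c a j = pos j - c - of_int \<lfloor>pos j - c - a\<rfloor>"
  unfolding Fr_def frac_def by simp

lemma Fr_rng: "0 \<le> Fr c a j" "Fr c a j < 1" unfolding Fr_def by (simp_all add: frac_lt_1)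

lemma fr_least:
  assumes "a \<le> x" "x = pos j - c + of_int k"
  shows "a + Fr c a j \<le> x"
proof -
  have "of_int (- k) \<le> pos j - c - a" using assms by simp
  then have "- k \<le> \<lfloor>pos j - c - a\<rfloor>" by (simp add: le_floor_iff)
  then have "- real_of_int \<lfloor>pos j - c - a\<rfloor> \<le> of_int k" by linarith
  then show ?thesis unfolding fr_eq using assms by simp
qed

lemma fr_mono: assumes "a1 \<le> a2" shows "a1 + Fr c a1 j \<le> a2 + Fr c a2 j"
proof (rule fr_least)
  show "a1 \<le> a2 + Fr c a2 j" using assms Fr_rng[of c a2 j] by simp
  show "a2 + Fr c a2 j = pos j - c + of_int (- \<lfloor>pos j - c - a2\<rfloor>)" unfolding fr_eq by simp
qed

lemma fr_fix:
  assumes "a1 \<le> a2" "a2 \<le> a1 + Fr c a1 j"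
  shows "a2 + Fr c a2 j = a1 + Fr c a1 j"
proof -
  have "a2 + Fr c a2 j \<le> a1 + Fr c a1 j"
    by (rule fr_least[where k="- \<lfloor>pos j - c - a1\<rfloor>"]) (use assms in \<open>auto simp: fr_eq\<close>)
  then show ?thesis using fr_mono[OF assms(1), of c j] by simp
qed

lemma Lf_range: assumes "a < b" shows "a \<le> Lf c a b" "Lf c a b \<le> b"
proof -
  have "a \<le> Lf c a b \<and> Lf c a b \<le> b"
  proof (cases "\<exists>j. istop c a b j")
    case True
    then obtain j where "istop c a b j" by auto
    then show ?thesis using Lf_top Fr_rng[of c a j] unfolding istop_def pres_def by auto
  next
    case False then show ?thesis using Lf_none assms by auto
  qed
  then show "a \<le> Lf c a b" "Lf c a b \<le> b" by auto
qed

lemma pres_mono: "a1 \<le> a2 \<Longrightarrow> b2 \<le> b1 \<Longrightarrow> pres c a2 b2 j \<Longrightarrow> pres c a1 b1 j"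
  unfolding pres_def using fr_mono[of a1 a2 c j] by linarith

lemma Lf_sub:
  assumes "a1 \<le> a2" "b2 \<le> b1" "a2 \<le> Lf c a1 b1" "Lf c a1 b1 \<le> b2"
  shows "Lf c a2 b2 = Lf c a1 b1"
proof (cases "\<exists>j. istop c a1 b1 j")
  case True
  then obtain j where j: "istop c a1 b1 j" by auto
  have L1: "Lf c a1 b1 = a1 + Fr c a1 j" by (rule Lf_top[OF j])
  have fx: "a2 + Fr c a2 j = a1 + Fr c a1 j" using fr_fix[OF assms(1)] assms(3) L1 by simp
  have "istop c a2 b2 j" unfolding istop_def
  proof (intro conjI ballI impI)
    show "j < K" using j unfolding istop_def by simp
    show "pres c a2 b2 j" unfolding pres_def using fx assms(4) L1 by simp
    fix j' assume "j' \<in> {..<K}" "pres c a2 b2 j'"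
    then show "lv j' \<le> lv j" using pres_mono[OF assms(1,2)] j unfolding istop_def by blast
  qed
  then show ?thesis using Lf_top fx L1 by simp
next
  case False
  then have L1: "Lf c a1 b1 = a1" by (simp add: Lf_none)
  then have a: "a2 = a1" using assms by simp
  have "\<not> istop c a2 b2 j" for j
  proof
    assume "istop c a2 b2 j"
    then have "j < K" "pres c a1 b1 j" using pres_mono[OF assms(1,2)] unfolding istop_def by auto
    then show False using ex_top False by blast
  qed
  then show ?thesis using L1 a by (simp add: Lf_none)
qed

lemma Fr_shift: "Fr (c + d) (a - d) j = Fr c a j" unfolding Fr_def by (simp add: algebra_simps)

lemma Lf_shift: "Lf (c + d) (a - d) (b - d) = Lf c a b - d"
proof -
  have p: "pres (c + d) (a - d) (b - d) j = pres c a b j" for j unfolding pres_def Fr_shift by simp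
  have i: "istop (c + d) (a - d) (b - d) j = istop c a b j" for j unfolding istop_def p by simp
  show ?thesis unfolding Lf_def i Fr_shift by simp
qed

lemma Fr_frac: "Fr (frac c) a j = Fr c a j"
proof -
  have e: "pos j - frac c - a = (pos j - c - a) + of_int \<lfloor>c\<rfloor>" by (simp add: frac_def)
  show ?thesis unfolding Fr_def e by (simp only: frac_add_of_int_right)
qed

lemma Lf_frac: "Lf (frac c) a b = Lf c a b"
  unfolding Lf_def istop_def pres_def Fr_frac by simp

lemma Lf_unit: "frac (Lf c a (a + 1)) = frac (pos j0 - c)"
proof -
  have "istop c a (a + 1) j0" unfolding istop_def pres_def using j0 top Fr_rng[of c a j0] by auto
  then have "Lf c a (a + 1) = pos j0 - c + of_int (- \<lfloor>pos j0 - c - a\<rfloor>)" using Lf_top fr_eq by simp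
  then show ?thesis by (simp only: frac_add_of_int_right)
qed

lemma pres_meas[measurable]: "Measurable.pred borel (\<lambda>c. pres c a b j)"
  unfolding pres_def Fr_def by measurable

lemma istop_meas[measurable]: "Measurable.pred borel (\<lambda>c. istop c a b j)"
proof -
  have "Measurable.pred borel (\<lambda>c. \<forall>j'\<in>{..<K}. pres c a b j' \<longrightarrow> lv j' \<le> lv j)"
    by (intro pred_intros_finite) auto
  then show ?thesis unfolding istop_def by simp
qed

lemma Fr_meas[measurable]: "(\<lambda>c. Fr c a j) \<in> borel_measurable borel"
  unfolding Fr_def by measurable

lemma Lf_meas: "(\<lambda>c. Lf c a b) \<in> borel_measurable borel"
proof -
  have "(\<lambda>c. if istop c a b j then Fr c a j else 0) \<in> borel_measurable borel" for j
    by measurable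
  then show ?thesis unfolding Lf_def by (intro borel_measurable_add borel_measurable_sum) auto
qed

lemma Lc_shift: "Lc (shift c g0) a b = ereal (Lf c a b)"
  unfolding Lc_def Phi_shift Lf_frac by simp

lemma inv_ILF: "invariant_ILF H0 Lc"
proof -
  have Hg: "g \<in> H0 \<Longrightarrow> \<exists>c. g = shift c g0" for g unfolding H0_def by auto
  have meas: "(\<lambda>g. Lc g a b) \<in> borel_measurable (H_space H0)" for a b
  proof -
    have "(\<lambda>g. Lc g a b) \<in> borel_measurable path_space"
      unfolding Lc_def using measurable_compose[OF Phi_meas Lf_meas] by simp
    then show ?thesis unfolding H_space_def by (rule measurable_restrict_space1)
  qed
  show ?thesis unfolding invariant_ILF_def intrinsic_location_functional_def
  proof (intro conjI allI impI ballI)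
    fix a b :: real assume "a < b"
    show "(\<lambda>g. Lc g a b) \<in> borel_measurable (H_space H0)" by (rule meas)
  next
    fix g and a b :: real assume g: "g \<in> H0" and ab: "a < b"
    obtain c where c: "g = shift c g0" using Hg[OF g] by auto
    show "Lc g a b \<in> ereal ` {a..b} \<union> {\<infinity>}" unfolding c Lc_shift using Lf_range[OF ab, of c] by auto
  next
    fix g and a b d :: real assume g: "g \<in> H0" and ab: "a < b"
    obtain c where c: "g = shift c g0" using Hg[OF g] by auto
    show "Lc g a b = Lc (shift d g) (a - d) (b - d) + ereal d"
      unfolding c shift_shift Lc_shift Lf_shift by simp
  next
    fix g and a1 b1 a2 b2 :: real
    assume g: "g \<in> H0" and ab: "a1 < b1 \<and> a2 < b2 \<and> a1 \<le> a2 \<and> b2 \<le> b1" and l: "Lc g a1 b1 \<in> ereal ` {a2..b2}"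
    obtain c where c: "g = shift c g0" using Hg[OF g] by auto
    show "Lc g a2 b2 = Lc g a1 b1" using l ab unfolding c Lc_shift by (auto intro: Lf_sub)
  next
    fix g and a1 b1 a2 b2 :: real assume "g \<in> H0"
    show "Lc g a1 b1 \<noteq> \<infinity>" unfolding Lc_def by simp
  next
    fix g and a b :: real assume "g \<in> H0" "a < b"
    show "Lc g a b \<noteq> \<infinity>" unfolding Lc_def by simp
  next
    fix g and a :: real assume g: "g \<in> H0"
    obtain c where c: "g = shift c g0" using Hg[OF g] by auto
    show "frac (real_of_ereal (Lc g 0 1)) = frac (real_of_ereal (Lc g a (a + 1)))"
      unfolding c Lc_shift using Lf_unit[of c 0] Lf_unit[of c a] by simp
  qed
qed

end

lemma lborel_transl:
  fixes c :: real
  assumes "S \<in> sets borel"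
  shows "emeasure lborel ((\<lambda>x. x + c) -` S) = emeasure lborel S"
proof -
  have "emeasure lborel S = emeasure (distr lborel borel ((+) c)) S" by (simp add: lborel_distr_plus)
  also have "\<dots> = emeasure lborel ((+) c -` S)" using assms by (simp add: emeasure_distr)
  also have "(+) c -` S = (\<lambda>x. x + c) -` S" by (auto simp: add.commute)
  finally show ?thesis by simp
qed

lemma lborel_refl:
  fixes p :: real
  assumes "S \<in> sets borel"
  shows "emeasure lborel ((\<lambda>x. p - x) -` S) = emeasure lborel S"
proof -
  have "(\<integral>\<^sup>+x. indicator S x \<partial>lborel) = (\<integral>\<^sup>+x. indicator S (p + (-1) * x) \<partial>lborel)"
    using nn_integral_real_affine[of "indicator S" "-1" p] assms by simp
  also have "(\<lambda>x. indicator S (p + (-1) * x) :: ennreal) = indicator ((\<lambda>x. p - x) -` S)"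
    by (auto simp: indicator_def)
  finally have e: "(\<integral>\<^sup>+x. indicator S x \<partial>lborel) = (\<integral>\<^sup>+x. indicator ((\<lambda>x. p - x) -` S) x \<partial>lborel)" .
  have "(\<lambda>x. p - x) -` S \<in> sets borel"
    using measurable_sets[of "\<lambda>x::real. p - x" borel borel S] assms by simp
  then show ?thesis using e assms by simp
qed

lemma per_int:
  fixes W :: "real set"
  assumes "\<And>u. (u + 1 \<in> W) = (u \<in> W)"
  shows "(u + of_int k \<in> W) = (u \<in> W)"
proof (induct k arbitrary: u rule: int_induct[where k=0])
  case base then show ?case by simp
next
  case (step1 i) then show ?case using assms[of "u + of_int i"] by (simp add: algebra_simps)
next
  case (step2 i) then show ?case using assms[of "u + of_int (i - 1)"] by (simp add: algebra_simps)
qed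

lemma per_meas:
  fixes W :: "real set"
  assumes W: "W \<in> sets borel" and per: "\<And>u. (u + 1 \<in> W) = (u \<in> W)"
  shows "emeasure lborel ({a..<a+1} \<inter> W) = emeasure lborel ({0..<1} \<inter> W)"
proof -
  have shiftk: "emeasure lborel ({b + of_int k..<b + of_int k + 1} \<inter> W) = emeasure lborel ({b..<b+1} \<inter> W)" for b k
  proof -
    have "(\<lambda>x. x + of_int k) -` ({b + of_int k..<b + of_int k + 1} \<inter> W) = {b..<b+1} \<inter> W"
      using per_int[OF per] by auto
    then show ?thesis using lborel_transl[of "{b + of_int k..<b + of_int k + 1} \<inter> W" "of_int k"] W by simp
  qed
  have frac_case: "emeasure lborel ({r..<r+1} \<inter> W) = emeasure lborel ({0..<1} \<inter> W)" if r: "0 \<le> r" "r < 1" for r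
  proof -
    have "emeasure lborel ({r..<r+1} \<inter> W) = emeasure lborel ({r..<1} \<inter> W) + emeasure lborel ({1..<1+r} \<inter> W)"
    proof -
      have "{r..<r+1} \<inter> W = ({r..<1} \<inter> W) \<union> ({1..<1+r} \<inter> W)" using r by auto
      moreover have "({r..<1} \<inter> W) \<inter> ({1..<1+r} \<inter> W) = {}" by auto
      ultimately show ?thesis using W plus_emeasure[of "{r..<1} \<inter> W" lborel "{1..<1+r} \<inter> W"] by simp
    qed
    also have "emeasure lborel ({1..<1+r} \<inter> W) = emeasure lborel ({0..<r} \<inter> W)"
    proof -
      have "(\<lambda>x. x + 1) -` ({1..<1+r} \<inter> W) = {0..<r} \<inter> W" using per by auto
      then show ?thesis using lborel_transl[of "{1..<1+r} \<inter> W" 1] W by simp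
    qed
    also have "emeasure lborel ({r..<1} \<inter> W) + emeasure lborel ({0..<r} \<inter> W) = emeasure lborel ({0..<1} \<inter> W)"
    proof -
      have "{0..<1} \<inter> W = ({r..<1} \<inter> W) \<union> ({0..<r} \<inter> W)" using r by auto
      moreover have "({r..<1} \<inter> W) \<inter> ({0..<r} \<inter> W) = {}" by auto
      ultimately show ?thesis using W plus_emeasure[of "{r..<1} \<inter> W" lborel "{0..<r} \<inter> W"] by simp
    qed
    finally show ?thesis .
  qed
  have "a = frac a + of_int \<lfloor>a\<rfloor>" by (simp add: frac_def)
  then have "emeasure lborel ({a..<a+1} \<inter> W) = emeasure lborel ({frac a + of_int \<lfloor>a\<rfloor>..<frac a + of_int \<lfloor>a\<rfloor> + 1} \<inter> W)"
    by simp
  also have "\<dots> = emeasure lborel ({frac a..<frac a + 1} \<inter> W)" by (rule shiftk)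
  also have "\<dots> = emeasure lborel ({0..<1} \<inter> W)" by (rule frac_case) (simp_all add: frac_lt_1)
  finally show ?thesis .
qed

definition U :: "real measure" where "U = uniform_measure lborel {0..<1}"
definition emb :: "real \<Rightarrow> real \<Rightarrow> real" where "emb u = (\<lambda>_. u)"
definition M0 :: "(real \<Rightarrow> real) measure" where "M0 = distr U path_space emb"
definition X0 :: "(real \<Rightarrow> real) \<Rightarrow> real \<Rightarrow> real" where "X0 \<omega> = shift (\<omega> 0) g0"

lemma U_prob: "prob_space U" unfolding U_def by (rule prob_space_uniform_measure) auto
lemma space_U[simp]: "space U = UNIV" and sets_U[simp]: "sets U = sets borel" unfolding U_def by auto
lemma emeasure_U: "S \<in> sets borel \<Longrightarrow> emeasure U S = emeasure lborel ({0..<1} \<inter> S)"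
  unfolding U_def by (simp add: divide_ennreal_def)

lemma measU: "f \<in> measurable borel N \<Longrightarrow> f \<in> measurable U N"
  using measurable_cong_sets[OF sets_U refl, of N] by simp

lemma emb_meas: "emb \<in> measurable borel path_space"
  unfolding emb_def path_space_def by (rule measurable_PiM_single') auto

lemma shg0_meas: "(\<lambda>u. shift (u + c) g0) \<in> measurable borel path_space"
  unfolding shift_def g0_def path_space_def by (rule measurable_PiM_single') auto

lemma X0_meas: "X0 \<in> measurable path_space path_space"
proof -
  have "(\<lambda>\<omega> x. cos (2 * pi * (x + \<omega> 0))) \<in> measurable path_space path_space"
    unfolding path_space_def
  proof (rule measurable_PiM_single')
    fix i :: real
    have "(\<lambda>\<omega>. \<omega> 0) \<in> borel_measurable (Pi\<^sub>M UNIV (\<lambda>_. borel))" by simp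
    then show "(\<lambda>\<omega>. cos (2 * pi * (i + \<omega> (0::real)))) \<in> borel_measurable (Pi\<^sub>M UNIV (\<lambda>_. borel))"
      by measurable
  qed simp
  then show ?thesis unfolding X0_def shift_def g0_def by simp
qed

lemma g0_per: "shift (u + 1) g0 = shift u g0"
proof
  fix x
  have "2 * pi * (x + (u + 1)) = 2 * pi * (x + u) + 2 * pi" by (simp add: algebra_simps)
  then show "shift (u + 1) g0 x = shift u g0 x" unfolding shift_def g0_def by simp
qed

lemma stat0: "distr M0 path_space (\<lambda>\<omega>. shift c (X0 \<omega>)) = distr M0 path_space X0"
proof -
  have sx: "(\<lambda>\<omega>. shift c (X0 \<omega>)) \<in> measurable path_space path_space" by (rule shift_meas[OF X0_meas])
  have em: "emb \<in> measurable U path_space" using emb_meas by (rule measU)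
  have "distr M0 path_space (\<lambda>\<omega>. shift c (X0 \<omega>)) = distr U path_space ((\<lambda>\<omega>. shift c (X0 \<omega>)) \<circ> emb)"
    unfolding M0_def using sx em by (simp add: distr_distr)
  also have "(\<lambda>\<omega>. shift c (X0 \<omega>)) \<circ> emb = (\<lambda>u. shift (u + c) g0)"
    unfolding X0_def emb_def by (auto simp: shift_shift)
  also have "distr U path_space (\<lambda>u. shift (u + c) g0) = distr U path_space (\<lambda>u. shift (u + 0) g0)"
  proof (rule measure_eqI)
    show "sets (distr U path_space (\<lambda>u. shift (u + c) g0)) = sets (distr U path_space (\<lambda>u. shift (u + 0) g0))" by simp
    fix A assume "A \<in> sets (distr U path_space (\<lambda>u. shift (u + c) g0))"
    then have A: "A \<in> sets path_space" by simp
    define W where "W = (\<lambda>u. shift (u + 0) g0) -` A"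
    have Wb: "W \<in> sets borel" unfolding W_def using measurable_sets[OF shg0_meas A, of 0] by simp
    have Wc: "(\<lambda>u. shift (u + c) g0) -` A = (\<lambda>x. x + c) -` W" unfolding W_def by auto
    have Wcb: "(\<lambda>x. x + c) -` W \<in> sets borel" using Wc measurable_sets[OF shg0_meas A, of c] by simp
    have Wper: "(u + 1 \<in> W) = (u \<in> W)" for u unfolding W_def by (simp add: g0_per)
    have "emeasure (distr U path_space (\<lambda>u. shift (u + c) g0)) A = emeasure U ((\<lambda>u. shift (u + c) g0) -` A \<inter> space U)"
      by (rule emeasure_distr[OF measU[OF shg0_meas] A])
    also have "\<dots> = emeasure lborel ({0..<1} \<inter> ((\<lambda>x. x + c) -` W))"
      using Wc Wcb emeasure_U by simp
    also have "{0..<1} \<inter> ((\<lambda>x. x + c) -` W) = (\<lambda>x. x + c) -` ({c..<c+1} \<inter> W)" by auto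
    also have "emeasure lborel \<dots> = emeasure lborel ({c..<c+1} \<inter> W)" using Wb by (intro lborel_transl) auto
    also have "\<dots> = emeasure lborel ({0..<1} \<inter> W)" by (rule per_meas[OF Wb Wper])
    also have "\<dots> = emeasure U ((\<lambda>u. shift (u + 0) g0) -` A \<inter> space U)"
      using Wb emeasure_U unfolding W_def by simp
    also have "\<dots> = emeasure (distr U path_space (\<lambda>u. shift (u + 0) g0)) A"
      by (rule emeasure_distr[OF measU[OF shg0_meas] A, symmetric])
    finally show "emeasure (distr U path_space (\<lambda>u. shift (u + c) g0)) A = emeasure (distr U path_space (\<lambda>u. shift (u + 0) g0)) A" .
  qed
  also have "(\<lambda>u. shift (u + 0) g0) = X0 \<circ> emb" unfolding X0_def emb_def by auto
  also have "distr U path_space (X0 \<circ> emb) = distr M0 path_space X0"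
    unfolding M0_def using X0_meas em by (simp add: distr_distr)
  finally show ?thesis .
qed

lemma psp0: "periodic_stationary_process H0 M0 X0"
proof -
  have em: "emb \<in> measurable U path_space" using emb_meas by (rule measU)
  have p: "prob_space M0" unfolding M0_def
    by (rule prob_space.prob_space_distr[OF U_prob em])
  have m: "X0 \<in> measurable M0 path_space" using X0_meas measurable_cong_sets[of M0 path_space path_space path_space] unfolding M0_def by simp
  have h: "X0 \<omega> \<in> H0" for \<omega> unfolding X0_def H0_def by auto
  have c: "continuous_on UNIV (X0 \<omega>)" for \<omega> unfolding X0_def shift_def g0_def by (intro continuous_intros)
  show ?thesis unfolding periodic_stationary_process_def
  proof (intro conjI)
    show "\<forall>\<omega>\<in>space M0. X0 \<omega> \<in> H0 \<and> continuous_on UNIV (X0 \<omega>)" using h c by blast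
    show "\<forall>c. distr M0 path_space (\<lambda>\<omega>. shift c (X0 \<omega>)) = distr M0 path_space X0" using stat0 by blast
  qed (rule p, rule m)
qed


context design begin

definition fj where "fj T y j \<longleftrightarrow> (\<forall>j'\<in>{..<K}. lv j < lv j' \<longrightarrow> T \<le> frac (pos j' - pos j + y))"
definition fden where "fden T y = (\<Sum>j<K. if fj T y j then 1 else (0::real))"

lemma Fr_per: "Fr (u + 1) a j = Fr u a j"
proof -
  have "pos j - (u + 1) - a = (pos j - u - a) + of_int (-1)" by simp
  then show ?thesis unfolding Fr_def by (simp only: frac_add_of_int_right)
qed

lemma istop_per: "istop (u + 1) a b j = istop u a b j"
  unfolding istop_def pres_def Fr_per by simp

lemma Fr_refl: "Fr (pos j - y) 0 j' = frac (pos j' - pos j + y)"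
  unfolding Fr_def by (simp add: algebra_simps)

lemma Fr_self: "Fr (pos j - y) 0 j = frac y"
  unfolding Fr_def by simp

lemma E_char:
  assumes y: "0 < y" "y \<le> T" "T < 1" and nz: "\<And>j'. j' < K \<Longrightarrow> frac (pos j' - pos j + y) \<noteq> T" and jK: "j < K"
  shows "istop (pos j - y) 0 T j = fj T y j"
proof -
  have pj: "pres (pos j - y) 0 T j" unfolding pres_def Fr_refl using y by simp
  have "istop (pos j - y) 0 T j \<longleftrightarrow> (\<forall>j'\<in>{..<K}. frac (pos j' - pos j + y) \<le> T \<longrightarrow> lv j' \<le> lv j)"
    unfolding istop_def using pj jK by (simp add: pres_def Fr_refl)
  also have "\<dots> \<longleftrightarrow> fj T y j" unfolding fj_def
  proof (rule ball_cong[OF refl])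
    fix j' assume "j' \<in> {..<K}"
    then have ne: "frac (pos j' - pos j + y) \<noteq> T" using nz by simp
    show "(frac (pos j' - pos j + y) \<le> T \<longrightarrow> lv j' \<le> lv j) = (lv j < lv j' \<longrightarrow> T \<le> frac (pos j' - pos j + y))"
    proof (cases "lv j < lv j'")
      case True then show ?thesis using ne by auto
    next
      case False then show ?thesis by auto
    qed
  qed
  finally show ?thesis .
qed

lemma law:
  assumes T: "0 < T" "T < 1" and A: "A \<in> sets borel" "A \<subseteq> {0<..<T}"
  shows "emeasure M0 {\<omega> \<in> space M0. Lc (X0 \<omega>) 0 T \<in> ereal ` A} = (\<integral>\<^sup>+y\<in>A. ennreal (fden T y) \<partial>lborel)"
proof -
  have Lfm: "(\<lambda>\<omega>::real\<Rightarrow>real. Lf (\<omega> 0) 0 T) \<in> borel_measurable path_space"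
  proof -
    have "(\<lambda>\<omega>::real\<Rightarrow>real. \<omega> 0) \<in> borel_measurable path_space" unfolding path_space_def by simp
    then show ?thesis using measurable_compose[OF _ Lf_meas] by blast
  qed
  define Q where "Q = {\<omega>::real\<Rightarrow>real. Lf (\<omega> 0) 0 T \<in> A}"
  have "Q = (\<lambda>\<omega>::real\<Rightarrow>real. Lf (\<omega> 0) 0 T) -` A \<inter> space path_space" unfolding Q_def by auto
  then have Qs: "Q \<in> sets path_space" using measurable_sets[OF Lfm A(1)] by simp
  have e1: "{\<omega> \<in> space M0. Lc (X0 \<omega>) 0 T \<in> ereal ` A} = Q"
    unfolding Q_def M0_def X0_def Lc_shift by auto
  define V where "V = {u. Lf u 0 T \<in> A}"
  have "V = (\<lambda>u. Lf u 0 T) -` A \<inter> space borel" unfolding V_def by auto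
  then have Vs: "V \<in> sets borel" using measurable_sets[OF Lf_meas A(1)] by simp
  have "emeasure M0 Q = emeasure U (emb -` Q \<inter> space U)"
    unfolding M0_def by (rule emeasure_distr[OF measU[OF emb_meas] Qs])
  also have "emb -` Q \<inter> space U = V" unfolding V_def Q_def emb_def by auto
  also have "emeasure U V = emeasure lborel ({0..<1} \<inter> V)" by (rule emeasure_U[OF Vs])
  finally have s1: "emeasure M0 {\<omega> \<in> space M0. Lc (X0 \<omega>) 0 T \<in> ereal ` A} = emeasure lborel ({0..<1} \<inter> V)"
    using e1 by simp
  define W where "W j = {u. istop u 0 T j \<and> Fr u 0 j \<in> A}" for j
  have Ws: "W j \<in> sets borel" for j unfolding W_def using A(1) by measurable
  have VW: "V = (\<Union>j\<in>{..<K}. W j)"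
  proof (intro set_eqI iffI)
    fix u assume u: "u \<in> V"
    show "u \<in> (\<Union>j\<in>{..<K}. W j)"
    proof (cases "\<exists>j. istop u 0 T j")
      case True
      then obtain j where j: "istop u 0 T j" by auto
      then have "j < K" unfolding istop_def by simp
      moreover have "u \<in> W j" using u j Lf_top[OF j] unfolding V_def W_def by simp
      ultimately show ?thesis by blast
    next
      case False
      then have "Lf u 0 T = 0" using Lf_none by simp
      then show ?thesis using u A(2) unfolding V_def by auto
    qed
  next
    fix u assume "u \<in> (\<Union>j\<in>{..<K}. W j)"
    then obtain j where "istop u 0 T j" "Fr u 0 j \<in> A" unfolding W_def by auto
    then show "u \<in> V" using Lf_top unfolding V_def by simp
  qed
  have s2: "emeasure lborel ({0..<1} \<inter> V) = (\<Sum>j<K. emeasure lborel ({0..<1} \<inter> W j))"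
  proof -
    have "{0..<1} \<inter> V = (\<Union>j\<in>{..<K}. {0..<1} \<inter> W j)" unfolding VW by auto
    moreover have "disjoint_family_on (\<lambda>j. {0..<1} \<inter> W j) {..<K}"
      unfolding disjoint_family_on_def W_def using istop_unique by blast
    ultimately show ?thesis using Ws by (simp add: sum_emeasure image_subset_iff)
  qed
  define E where "E j = {y. istop (pos j - y) 0 T j}" for j
  have Es: "E j \<in> sets borel" for j
  proof -
    have "(\<lambda>y. pos j - y) \<in> borel_measurable borel" by simp
    then have "Measurable.pred borel (\<lambda>y. istop (pos j - y) 0 T j)"
      using measurable_compose[OF _ istop_meas] by blast
    then show ?thesis unfolding E_def by (simp add: pred_def)
  qed
  have s3: "emeasure lborel ({0..<1} \<inter> W j) = emeasure lborel (A \<inter> E j)" for j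
  proof -
    have Wper: "(u + 1 \<in> W j) = (u \<in> W j)" for u using istop_per[of u 0 T j] Fr_per[of u 0 j] by (simp add: W_def)
    have "emeasure lborel ({0..<1} \<inter> W j) = emeasure lborel ({pos j - 1..<pos j - 1 + 1} \<inter> W j)"
      by (rule per_meas[OF Ws Wper, symmetric])
    also have "\<dots> = emeasure lborel ((\<lambda>y. pos j - y) -` ({pos j - 1..<pos j - 1 + 1} \<inter> W j))"
      by (rule lborel_refl[symmetric]) (use Ws in simp)
    also have "(\<lambda>y. pos j - y) -` ({pos j - 1..<pos j - 1 + 1} \<inter> W j) = A \<inter> E j"
    proof (intro set_eqI iffI)
      fix y assume "y \<in> (\<lambda>y. pos j - y) -` ({pos j - 1..<pos j - 1 + 1} \<inter> W j)"
      then have y: "0 < y" "y \<le> 1" "istop (pos j - y) 0 T j" "frac y \<in> A"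
        by (auto simp: W_def Fr_self)
      have "y \<noteq> 1" using y(4) A(2) by auto
      then have "frac y = y" using y by (simp add: frac_eq)
      then show "y \<in> A \<inter> E j" using y unfolding E_def by auto
    next
      fix y assume y: "y \<in> A \<inter> E j"
      then have "0 < y" "y < 1" using A(2) T by auto
      then show "y \<in> (\<lambda>y. pos j - y) -` ({pos j - 1..<pos j - 1 + 1} \<inter> W j)"
        using y by (simp add: W_def E_def Fr_self frac_eq)
    qed
    finally show ?thesis .
  qed
  define Z where "Z = (\<Union>j\<in>{..<K}. \<Union>j'\<in>{..<K}. range (\<lambda>k::int. T - (pos j' - pos j) + of_int k))"
  have Zn: "Z \<in> null_sets lborel" unfolding Z_def by (intro countable_imp_null_set_lborel) auto
  have Zc: "frac (pos j' - pos j + y) \<noteq> T" if "y \<notin> Z" "j < K" "j' < K" for y j j'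
  proof
    assume "frac (pos j' - pos j + y) = T"
    then have "y = T - (pos j' - pos j) + of_int \<lfloor>pos j' - pos j + y\<rfloor>" by (simp add: frac_def)
    then show False using that unfolding Z_def by blast
  qed
  have s4: "(\<Sum>j<K. emeasure lborel (A \<inter> E j)) = (\<integral>\<^sup>+y. (\<Sum>j<K. indicator (A \<inter> E j) y) \<partial>lborel)"
  proof -
    have "(\<Sum>j<K. emeasure lborel (A \<inter> E j)) = (\<Sum>j<K. \<integral>\<^sup>+y. indicator (A \<inter> E j) y \<partial>lborel)"
      using A(1) Es by simp
    also have "\<dots> = (\<integral>\<^sup>+y. (\<Sum>j<K. indicator (A \<inter> E j) y) \<partial>lborel)"
      by (rule nn_integral_sum[symmetric]) (use A(1) Es in auto)
    finally show ?thesis .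
  qed
  have s5: "(\<integral>\<^sup>+y. (\<Sum>j<K. indicator (A \<inter> E j) y) \<partial>lborel) = (\<integral>\<^sup>+y\<in>A. ennreal (fden T y) \<partial>lborel)"
  proof (rule nn_integral_cong_AE)
    show "AE y in lborel. (\<Sum>j<K. indicator (A \<inter> E j) y) = ennreal (fden T y) * indicator A y"
      using AE_not_in[OF Zn]
    proof eventually_elim
      case (elim y)
      show ?case
      proof (cases "y \<in> A")
        case False then show ?thesis by simp
      next
        case True
        then have y: "0 < y" "y \<le> T" using A(2) by auto
        have "(\<Sum>j<K. indicator (A \<inter> E j) y) = (\<Sum>j<K. ennreal (if fj T y j then 1 else 0))"
        proof (rule sum.cong)
          fix j assume "j \<in> {..<K}"
          then have "istop (pos j - y) 0 T j = fj T y j"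
            using E_char[OF y T(2)] Zc[OF elim] by auto
          then show "indicator (A \<inter> E j) y = ennreal (if fj T y j then 1 else 0)"
            using True unfolding E_def by (simp add: indicator_def)
        qed simp
        also have "\<dots> = ennreal (fden T y)" unfolding fden_def by (subst sum_ennreal) auto
        finally show ?thesis using True by simp
      qed
    qed
  qed
  show ?thesis using s1 s2 s3 s4 s5 by simp
qed

end

definition lcr :: "(real \<Rightarrow> 'a) \<Rightarrow> real \<Rightarrow> bool" where
  "lcr f y \<longleftrightarrow> (\<exists>\<epsilon>>0. \<forall>e. 0 \<le> e \<longrightarrow> e < \<epsilon> \<longrightarrow> f (y + e) = f y)"
definition lcl :: "(real \<Rightarrow> 'a) \<Rightarrow> real \<Rightarrow> bool" where
  "lcl f y \<longleftrightarrow> (\<exists>\<epsilon>>0. \<exists>l. \<forall>e. 0 < e \<longrightarrow> e < \<epsilon> \<longrightarrow> f (y - e) = l)"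

lemma lcr_comb:
  assumes "lcr f y" "lcr g y" shows "lcr (\<lambda>z. F (f z) (g z)) y"
proof -
  obtain e1 where e1: "e1 > 0" "\<And>e. 0 \<le> e \<Longrightarrow> e < e1 \<Longrightarrow> f (y + e) = f y" using assms(1) unfolding lcr_def by auto
  obtain e2 where e2: "e2 > 0" "\<And>e. 0 \<le> e \<Longrightarrow> e < e2 \<Longrightarrow> g (y + e) = g y" using assms(2) unfolding lcr_def by auto
  show ?thesis unfolding lcr_def
  proof (rule exI[of _ "min e1 e2"], intro conjI allI impI)
    show "0 < min e1 e2" using e1 e2 by simp
    fix e :: real assume "0 \<le> e" "e < min e1 e2"
    then show "F (f (y + e)) (g (y + e)) = F (f y) (g y)" using e1(2)[of e] e2(2)[of e] by simp
  qed
qed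

lemma lcl_comb:
  assumes "lcl f y" "lcl g y" shows "lcl (\<lambda>z. F (f z) (g z)) y"
proof -
  obtain e1 l1 where e1: "e1 > 0" "\<And>e. 0 < e \<Longrightarrow> e < e1 \<Longrightarrow> f (y - e) = l1" using assms(1) unfolding lcl_def by auto
  obtain e2 l2 where e2: "e2 > 0" "\<And>e. 0 < e \<Longrightarrow> e < e2 \<Longrightarrow> g (y - e) = l2" using assms(2) unfolding lcl_def by auto
  show ?thesis unfolding lcl_def
  proof (rule exI[of _ "min e1 e2"], intro conjI exI[of _ "F l1 l2"] allI impI)
    show "0 < min e1 e2" using e1 e2 by simp
    fix e :: real assume "0 < e" "e < min e1 e2"
    then show "F (f (y - e)) (g (y - e)) = F l1 l2" using e1(2)[of e] e2(2)[of e] by simp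
  qed
qed

lemma lcr_const: "lcr (\<lambda>z. c) y" unfolding lcr_def by (rule exI[of _ 1]) auto
lemma lcl_const: "lcl (\<lambda>z. c) y" unfolding lcl_def by (rule exI[of _ 1]) auto
lemma lcr_map: "lcr f y \<Longrightarrow> lcr (\<lambda>z. h (f z)) y" using lcr_comb[of f y f "\<lambda>a b. h a"] by simp
lemma lcl_map: "lcl f y \<Longrightarrow> lcl (\<lambda>z. h (f z)) y" using lcl_comb[of f y f "\<lambda>a b. h a"] by simp

lemma lcr_sum:
  fixes g :: "'i \<Rightarrow> real \<Rightarrow> real"
  assumes "finite S" "\<And>i. i \<in> S \<Longrightarrow> lcr (g i) y" shows "lcr (\<lambda>z. \<Sum>i\<in>S. g i z) y"
  using assms
proof (induct S rule: finite_induct)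
  case empty then show ?case by (simp add: lcr_const)
next
  case (insert x F)
  then have "lcr (\<lambda>z. g x z + (\<Sum>i\<in>F. g i z)) y" using lcr_comb[of "g x" y "\<lambda>z. \<Sum>i\<in>F. g i z" "(+)"] by simp
  then show ?case using insert by simp
qed

lemma lcl_sum:
  fixes g :: "'i \<Rightarrow> real \<Rightarrow> real"
  assumes "finite S" "\<And>i. i \<in> S \<Longrightarrow> lcl (g i) y" shows "lcl (\<lambda>z. \<Sum>i\<in>S. g i z) y"
  using assms
proof (induct S rule: finite_induct)
  case empty then show ?case by (simp add: lcl_const)
next
  case (insert x F)
  then have "lcl (\<lambda>z. g x z + (\<Sum>i\<in>F. g i z)) y" using lcl_comb[of "g x" y "\<lambda>z. \<Sum>i\<in>F. g i z" "(+)"] by simp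
  then show ?case using insert by simp
qed

lemma lcr_ball:
  fixes P :: "'i \<Rightarrow> real \<Rightarrow> bool"
  assumes "finite S" "\<And>i. i \<in> S \<Longrightarrow> lcr (P i) y" shows "lcr (\<lambda>z. \<forall>i\<in>S. P i z) y"
  using assms
proof (induct S rule: finite_induct)
  case empty then show ?case by (simp add: lcr_const)
next
  case (insert x F)
  then have "lcr (\<lambda>z. P x z \<and> (\<forall>i\<in>F. P i z)) y" using lcr_comb[of "P x" y "\<lambda>z. \<forall>i\<in>F. P i z" "(\<and>)"] by simp
  then show ?case using insert by simp
qed

lemma lcl_ball:
  fixes P :: "'i \<Rightarrow> real \<Rightarrow> bool"
  assumes "finite S" "\<And>i. i \<in> S \<Longrightarrow> lcl (P i) y" shows "lcl (\<lambda>z. \<forall>i\<in>S. P i z) y"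
  using assms
proof (induct S rule: finite_induct)
  case empty then show ?case by (simp add: lcl_const)
next
  case (insert x F)
  then have "lcl (\<lambda>z. P x z \<and> (\<forall>i\<in>F. P i z)) y" using lcl_comb[of "P x" y "\<lambda>z. \<forall>i\<in>F. P i z" "(\<and>)"] by simp
  then show ?case using insert by simp
qed

lemma frac_shift_small:
  assumes "0 \<le> w" "frac z + w < 1" shows "frac (z + w) = frac z + w"
proof -
  have "z + w = of_int \<lfloor>z\<rfloor> + (frac z + w)" by (simp add: frac_def)
  then have "frac (z + w) = frac (frac z + w)" by (simp only: frac_add_of_int_left)
  also have "\<dots> = frac z + w" by (metis frac_eq assms add_nonneg_nonneg frac_ge_0)
  finally show ?thesis .
qed

lemma frac_shift_neg:
  assumes "0 < e" "e \<le> frac z" shows "frac (z - e) = frac z - e"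
proof -
  have "z - e = of_int \<lfloor>z\<rfloor> + (frac z - e)" by (simp add: frac_def)
  then have "frac (z - e) = frac (frac z - e)" by (simp only: frac_add_of_int_left)
  also have "\<dots> = frac z - e" using assms frac_lt_1[of z] by (simp add: frac_eq)
  finally show ?thesis .
qed

lemma frac_shift_neg0:
  assumes "0 < e" "e < 1" "frac z = 0" shows "frac (z - e) = 1 - e"
proof -
  have "z - e = of_int (\<lfloor>z\<rfloor> - 1) + (1 - e)" using assms by (simp add: frac_def)
  then have "frac (z - e) = frac (1 - e)" by (simp only: frac_add_of_int_left)
  also have "\<dots> = 1 - e" using assms by (simp add: frac_eq)
  finally show ?thesis .
qed

lemma atom_lcr:
  assumes "T \<le> 1" shows "lcr (\<lambda>y. T \<le> frac (c + y)) y"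
proof -
  define r where "r = frac (c + y)"
  have r: "0 \<le> r" "r < 1" unfolding r_def by (simp_all add: frac_lt_1)
  have A1: "frac (c + (y + e)) = r + e" if "0 \<le> e" "r + e < 1" for e
    using frac_shift_small[of e "c + y"] that unfolding r_def by (metis add.assoc)
  show ?thesis
  proof (cases "T \<le> r")
    case True
    show ?thesis unfolding lcr_def
    proof (rule exI[of _ "1 - r"], intro conjI allI impI)
      show "0 < 1 - r" using r by simp
      fix e :: real assume e: "0 \<le> e" "e < 1 - r"
      have "frac (c + (y + e)) = r + e" using A1 e by simp
      moreover have "frac (c + y) = r" unfolding r_def ..
      ultimately show "(T \<le> frac (c + (y + e))) = (T \<le> frac (c + y))" using True e by linarith
    qed
  next
    case False
    show ?thesis unfolding lcr_def
    proof (rule exI[of _ "T - r"], intro conjI allI impI)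
      show "0 < T - r" using False by simp
      fix e :: real assume e: "0 \<le> e" "e < T - r"
      have "frac (c + (y + e)) = r + e" using A1 e assms by simp
      moreover have "frac (c + y) = r" unfolding r_def ..
      ultimately show "(T \<le> frac (c + (y + e))) = (T \<le> frac (c + y))" using False e by linarith
    qed
  qed
qed

lemma atom_lcl:
  assumes "T < 1" "0 < T" shows "lcl (\<lambda>y. T \<le> frac (c + y)) y"
proof -
  define r where "r = frac (c + y)"
  have r: "0 \<le> r" "r < 1" unfolding r_def by (simp_all add: frac_lt_1)
  have A2: "frac (c + (y - e)) = r - e" if "0 < e" "e \<le> r" for e
    using frac_shift_neg[of e "c + y"] that unfolding r_def by (metis add_diff_eq)
  have A3: "frac (c + (y - e)) = 1 - e" if "0 < e" "e < 1" "r = 0" for e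
    using frac_shift_neg0[of e "c + y"] that unfolding r_def by (metis add_diff_eq)
  show ?thesis
  proof (cases "r = 0")
    case True
    show ?thesis unfolding lcl_def
    proof (rule exI[of _ "1 - T"], intro conjI exI[of _ True] allI impI)
      show "0 < 1 - T" using assms by simp
      fix e :: real assume e: "0 < e" "e < 1 - T"
      have "frac (c + (y - e)) = 1 - e" using A3[of e] e assms True by simp
      then show "(T \<le> frac (c + (y - e))) = True" using e by simp
    qed
  next
    case False
    then have rp: "0 < r" using r by simp
    show ?thesis
    proof (cases "T < r")
      case True
      show ?thesis unfolding lcl_def
      proof (rule exI[of _ "r - T"], intro conjI exI[of _ True] allI impI)
        show "0 < r - T" using True by simp
        fix e :: real assume e: "0 < e" "e < r - T"
        have "frac (c + (y - e)) = r - e" using A2[of e] e assms by simp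
        then show "(T \<le> frac (c + (y - e))) = True" using e by simp
      qed
    next
      case False
      show ?thesis unfolding lcl_def
      proof (rule exI[of _ "r"], intro conjI exI[of _ False] allI impI)
        show "0 < r" by (rule rp)
        fix e :: real assume e: "0 < e" "e < r"
        have "frac (c + (y - e)) = r - e" using A2[of e] e by simp
        then show "(T \<le> frac (c + (y - e))) = False" using e False by simp
      qed
    qed
  qed
qed

lemma lcr_cont: assumes "lcr f y" shows "continuous (at_right y) f"
proof -
  obtain \<epsilon> where e: "\<epsilon> > 0" "\<And>e. 0 \<le> e \<Longrightarrow> e < \<epsilon> \<Longrightarrow> f (y + e) = f y" using assms unfolding lcr_def by auto
  have "f z = f y" if "y < z" "z < y + \<epsilon>" for z
    using e(2)[of "z - y"] that by simp
  then have "eventually (\<lambda>z. f z = f y) (at_right y)"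
    unfolding eventually_at_right_field using e(1) by (intro exI[of _ "y + \<epsilon>"]) simp
  then have "(f \<longlongrightarrow> f y) (at_right y)" by (rule tendsto_eventually)
  then show ?thesis by (simp add: continuous_within)
qed

lemma lcl_lim: assumes "lcl f y" shows "\<exists>l. (f \<longlongrightarrow> l) (at_left y)"
proof -
  obtain \<epsilon> l where e: "\<epsilon> > 0" "\<And>e. 0 < e \<Longrightarrow> e < \<epsilon> \<Longrightarrow> f (y - e) = l" using assms unfolding lcl_def by auto
  have "f z = l" if "y - \<epsilon> < z" "z < y" for z
    using e(2)[of "y - z"] that by simp
  then have "eventually (\<lambda>z. f z = l) (at_left y)"
    unfolding eventually_at_left_field using e(1) by (intro exI[of _ "y - \<epsilon>"]) simp
  then show ?thesis using tendsto_eventually by blast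
qed

context design begin

lemma fj_lcr: assumes "T \<le> 1" shows "lcr (\<lambda>y. fj T y j) y"
proof -
  have "lcr (\<lambda>y. lv j < lv j' \<longrightarrow> T \<le> frac (pos j' - pos j + y)) y" for j'
    using lcr_map[OF atom_lcr[OF assms, of "pos j' - pos j" y], of "\<lambda>b. lv j < lv j' \<longrightarrow> b"] by simp
  then show ?thesis unfolding fj_def by (rule lcr_ball[rotated]) simp
qed

lemma fj_lcl: assumes "T < 1" "0 < T" shows "lcl (\<lambda>y. fj T y j) y"
proof -
  have "lcl (\<lambda>y. lv j < lv j' \<longrightarrow> T \<le> frac (pos j' - pos j + y)) y" for j'
    using lcl_map[OF atom_lcl[OF assms(1,2), of "pos j' - pos j" y], of "\<lambda>b. lv j < lv j' \<longrightarrow> b"] by simp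
  then show ?thesis unfolding fj_def by (rule lcl_ball[rotated]) simp
qed

lemma fden_lcr: assumes "T \<le> 1" shows "lcr (fden T) y"
proof -
  have "lcr (\<lambda>y. if fj T y j then 1 else (0::real)) y" for j
    using lcr_map[OF fj_lcr[OF assms, of j y], of "\<lambda>b. if b then 1 else (0::real)"] by simp
  then have "lcr (\<lambda>y. \<Sum>j<K. if fj T y j then 1 else (0::real)) y" by (rule lcr_sum[rotated]) simp
  then show ?thesis unfolding fden_def[abs_def] by simp
qed

lemma fden_lcl: assumes "T < 1" "0 < T" shows "lcl (fden T) y"
proof -
  have "lcl (\<lambda>y. if fj T y j then 1 else (0::real)) y" for j
    using lcl_map[OF fj_lcl[OF assms(1,2), of j y], of "\<lambda>b. if b then 1 else (0::real)"] by simp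
  then have "lcl (\<lambda>y. \<Sum>j<K. if fj T y j then 1 else (0::real)) y" by (rule lcl_sum[rotated]) simp
  then show ?thesis unfolding fden_def[abs_def] by simp
qed

end

lemma frac_neg_small: assumes "-1 < w" "w < 0" shows "frac w = w + 1"
proof -
  have "w = of_int (-1) + (w + 1)" by simp
  then have "frac w = frac (w + 1)" by (metis frac_add_of_int_left)
  also have "\<dots> = w + 1" using assms by (simp add: frac_eq)
  finally show ?thesis .
qed

lemma construct:
  fixes T t \<delta> :: real and b :: bool
  assumes T: "0 < T" "T < 1" and t: "0 < t" "t < T" and dl: "0 < \<delta>"
    and nint: "(1 - T) / \<delta> \<notin> \<int>" and cs: "if b then \<delta> = t else \<delta> = T - t"
  shows "\<exists>(H :: (real \<Rightarrow> real) set) L (M :: (real \<Rightarrow> real) measure) X f.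
           periodic_shift_class H \<and> invariant_ILF H L \<and> periodic_stationary_process H M X \<and>
           cadlag_density_on T M (\<lambda>\<omega>. L (X \<omega>) 0 T) f \<and> f t = real (nat \<lfloor>(1 - T) / \<delta>\<rfloor>) + 2"
proof -
  define G where "G = 1 - T"
  have G: "0 < G" "G < 1" using T unfolding G_def by auto
  define k where "k = nat \<lfloor>G / \<delta>\<rfloor>"
  have fl0: "0 \<le> \<lfloor>G / \<delta>\<rfloor>" using G dl by simp
  have kr: "real k = of_int \<lfloor>G / \<delta>\<rfloor>" unfolding k_def using fl0 by simp
  have "of_int \<lfloor>G / \<delta>\<rfloor> \<noteq> G / \<delta>" using nint unfolding G_def by (metis Ints_of_int)
  then have "real k < G / \<delta>" unfolding kr by (meson floor_less_iff le_less of_int_floor_le)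
  then have kd: "real k * \<delta> < G" using dl by (simp add: less_divide_eq)
  define n where "n = k + 1"
  define \<eta> where "\<eta> = (G - real k * \<delta>) / (2 * real n)"
  have eta: "0 < \<eta>" using kd unfolding \<eta>_def n_def by simp
  define d where "d = \<delta> + \<eta>"
  have kd2: "real k * d < G"
  proof -
    have "real k * \<eta> \<le> (G - real k * \<delta>) / 2"
    proof -
      have "real k * \<eta> = (G - real k * \<delta>) * (real k / (2 * real n))" unfolding \<eta>_def by simp
      also have "\<dots> \<le> (G - real k * \<delta>) * (1/2)"
        using kd unfolding n_def by (intro mult_left_mono) (auto simp: field_simps)
      finally show ?thesis by simp
    qed
    then show ?thesis using kd unfolding d_def by (simp add: algebra_simps)
  qed
  define e where "e = (G - real k * d) / 2"
  have e: "0 < e" using kd2 unfolding e_def by simp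
  have dpos: "\<delta> < d" using eta unfolding d_def by simp
  define s where "s i = e + real i * d" for i :: nat
  have s: "0 < s i" "s i < G" if "i \<le> k" for i
  proof -
    have id: "real i * d \<le> real k * d" using that dpos dl by (intro mult_right_mono) auto
    have "0 \<le> real i * d" using dpos dl by simp
    then show "0 < s i" using e unfolding s_def by linarith
    have ee: "e = G / 2 - real k * d / 2" unfolding e_def by (simp add: diff_divide_distrib)
    show "s i < G" using id kd2 unfolding s_def ee by linarith
  qed
  define x where "x i = s i + t" for i
  define pos where "pos j = (if j = 0 then 0 else x (j - 1))" for j
  define lv where "lv j = (if j = 0 then n + 1 else if b then n - (j - 1) else j)" for j
  have des: "design (n + 1) lv 0"
  proof
    show "inj_on lv {..<n + 1}" unfolding inj_on_def lv_def n_def by auto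
    show "0 < n + 1" by simp
    fix j assume "j < n + 1" then show "lv j \<le> lv 0" unfolding lv_def by auto
  qed
  interpret d: design "n + 1" pos lv 0 by (rule des)
  have fjall: "d.fj T t j" if "j < n + 1" for j
    unfolding d.fj_def
  proof (intro ballI impI)
    fix j' assume j': "j' \<in> {..<n + 1}" and lvl: "lv j < lv j'"
    have j0: "j \<noteq> 0" using lvl j' unfolding lv_def by (auto split: if_splits)
    define i where "i = j - 1"
    have ji: "j = i + 1" "i \<le> k" using j0 that unfolding i_def n_def by auto
    show "T \<le> frac (pos j' - pos j + t)"
    proof (cases "j' = 0")
      case True
      have "pos j' - pos j + t = - s i" using ji unfolding pos_def x_def True by simp
      moreover have "frac (- s i) = 1 - s i" using s[OF ji(2)] G frac_neg_small[of "- s i"] by simp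
      ultimately show ?thesis using s[OF ji(2)] unfolding G_def by simp
    next
      case False
      define i' where "i' = j' - 1"
      have ji': "j' = i' + 1" "i' \<le> k" using False j' unfolding i'_def n_def by auto
      have diff: "pos j' - pos j + t = (real i' - real i) * d + t"
        using ji ji' unfolding pos_def x_def s_def by (simp add: algebra_simps)
      show ?thesis
      proof (cases b)
        case True
        then have dt: "\<delta> = t" using cs by simp
        have "i' < i" using lvl True ji ji' unfolding lv_def n_def by auto
        define m where "m = i - i'"
        have m: "1 \<le> m" "m \<le> k" "real i' - real i = - real m" using \<open>i' < i\<close> ji ji' unfolding m_def by auto
        have md: "d \<le> real m * d" "real m * d \<le> real k * d" using m dl dpos
          by (auto intro: mult_right_mono)
        have w1: "-1 < - real m * d + t" using md kd2 G t by linarith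
        have w2: "- real m * d + t < 0" using md dt dpos by linarith
        note w = w1 w2
        have "frac (pos j' - pos j + t) = - real m * d + t + 1"
          unfolding diff m(3) using frac_neg_small[OF w] by simp
        then show ?thesis using md kd2 t unfolding G_def by linarith
      next
        case False
        then have dt: "\<delta> = T - t" using cs by simp
        have "i < i'" using lvl False ji ji' unfolding lv_def n_def by auto
        define m where "m = i' - i"
        have m: "1 \<le> m" "m \<le> k" "real i' - real i = real m" using \<open>i < i'\<close> ji ji' unfolding m_def by auto
        have md: "d \<le> real m * d" "real m * d \<le> real k * d" using m dl dpos
          by (auto intro: mult_right_mono)
        have w1: "0 \<le> real m * d + t" using md dl dpos t by linarith
        have w2: "real m * d + t < 1" using md kd2 t unfolding G_def by linarith
        note w = w1 w2
        have "frac (pos j' - pos j + t) = real m * d + t"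
          unfolding diff m(3) using w by (simp add: frac_eq)
        then show ?thesis using md dt dpos by linarith
      qed
    qed
  qed
  have ft: "d.fden T t = real (nat \<lfloor>(1 - T) / \<delta>\<rfloor>) + 2"
  proof -
    have "d.fden T t = (\<Sum>j<n + 1. 1)" unfolding d.fden_def using fjall by (intro sum.cong) auto
    also have "\<dots> = real k + 2" unfolding n_def by simp
    finally show ?thesis unfolding k_def G_def .
  qed
  have cd: "cadlag_density_on T M0 (\<lambda>\<omega>. d.Lc (X0 \<omega>) 0 T) (d.fden T)"
    unfolding cadlag_density_on_def
  proof (intro conjI ballI impI)
    fix y assume "y \<in> {0<..<T}"
    show "0 \<le> d.fden T y" unfolding d.fden_def by (intro sum_nonneg) auto
    show "continuous (at_right y) (d.fden T)" using lcr_cont[OF d.fden_lcr] T by simp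
    show "\<exists>l. (d.fden T \<longlongrightarrow> l) (at_left y)" using lcl_lim[OF d.fden_lcl] T by simp
  next
    fix A :: "real set" assume "A \<in> sets borel" "A \<subseteq> {0<..<T}"
    then show "emeasure M0 {\<omega> \<in> space M0. d.Lc (X0 \<omega>) 0 T \<in> ereal ` A} = (\<integral>\<^sup>+x\<in>A. ennreal (d.fden T x) \<partial>lborel)"
      using d.law T by simp
  qed
  show ?thesis
    by (rule exI[of _ H0], rule exI[of _ d.Lc], rule exI[of _ M0], rule exI[of _ X0], rule exI[of _ "d.fden T"])
       (use H0_psc d.inv_ILF psp0 cd ft in simp)
qed


lemma part2:
  fixes T t :: real
  assumes T: "0 < T" "T \<le> 1"
    and c: "(0 < t \<and> t < T / 2 \<and> (1 - T) / t \<notin> \<int>) \<or> (T / 2 \<le> t \<and> t < T \<and> (1 - T) / (T - t) \<notin> \<int>)"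
  shows "\<exists>(H :: (real \<Rightarrow> real) set) L (M :: (real \<Rightarrow> real) measure) X f.
                   periodic_shift_class H \<and> invariant_ILF H L \<and>
                   periodic_stationary_process H M X \<and>
                   cadlag_density_on T M (\<lambda>\<omega>. L (X \<omega>) 0 T) f \<and>
                   f t = density_bound T t"
proof -
  have T1: "T < 1"
  proof (rule ccontr)
    assume "\<not> T < 1" then have "T = 1" using T by simp
    then show False using c by simp
  qed
  define G where "G = 1 - T"
  have G0: "0 \<le> G" using T unfolding G_def by simp
  from c show ?thesis
  proof
    assume a: "0 < t \<and> t < T / 2 \<and> (1 - T) / t \<notin> \<int>"
    then have tt: "0 < t" "t < T" "t \<le> T - t" by auto
    obtain H L and M :: "(real \<Rightarrow> real) measure" and X f where hyp: "periodic_shift_class H" "invariant_ILF H L" "periodic_stationary_process H M X"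
        "cadlag_density_on T M (\<lambda>\<omega>. L (X \<omega>) 0 (T::real)) f" "f t = real (nat \<lfloor>(1 - T) / t\<rfloor>) + 2"
      using construct[OF T(1) T1 tt(1,2) tt(1), of True] a by fastforce
    have le: "G / (T - t) \<le> G / t" using G0 tt by (intro divide_left_mono) auto
    then have "\<lfloor>G / (T - t)\<rfloor> \<le> \<lfloor>G / t\<rfloor>" by (rule floor_mono)
    moreover have "0 \<le> \<lfloor>G / t\<rfloor>" using G0 tt by simp
    ultimately have "density_bound T t = real (nat \<lfloor>(1 - T) / t\<rfloor>) + 2"
      unfolding density_bound_def G_def by simp
    then show ?thesis using hyp by metis
  next
    assume a: "T / 2 \<le> t \<and> t < T \<and> (1 - T) / (T - t) \<notin> \<int>"
    then have tt: "0 < t" "t < T" "T - t \<le> t" "0 < T - t" using T by auto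
    obtain H L and M :: "(real \<Rightarrow> real) measure" and X f where hyp: "periodic_shift_class H" "invariant_ILF H L" "periodic_stationary_process H M X"
        "cadlag_density_on T M (\<lambda>\<omega>. L (X \<omega>) 0 (T::real)) f" "f t = real (nat \<lfloor>(1 - T) / (T - t)\<rfloor>) + 2"
      using construct[OF T(1) T1 tt(1,2) tt(4), of False] a by fastforce
    have le: "G / t \<le> G / (T - t)" using G0 tt by (intro divide_left_mono) auto
    then have "\<lfloor>G / t\<rfloor> \<le> \<lfloor>G / (T - t)\<rfloor>" by (rule floor_mono)
    moreover have "0 \<le> \<lfloor>G / (T - t)\<rfloor>" using G0 tt by simp
    ultimately have "density_bound T t = real (nat \<lfloor>(1 - T) / (T - t)\<rfloor>) + 2"
      unfolding density_bound_def G_def by simp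
    then show ?thesis using hyp by metis
  qed
qed

theorem mainTheorem9:
  shows "(\<forall>(H :: (real \<Rightarrow> real) set) L (M :: 'w measure) X T f t.
            periodic_shift_class H \<and> invariant_ILF H L \<and> periodic_stationary_process H M X \<and>
            0 < T \<and> T \<le> 1 \<and> cadlag_density_on T M (\<lambda>\<omega>. L (X \<omega>) 0 T) f \<and> t \<in> {0<..<T}
            \<longrightarrow> f t \<le> density_bound T t)
       \<and> (\<forall>T t. 0 < T \<and> T \<le> 1 \<and>
            ((0 < t \<and> t < T / 2 \<and> (1 - T) / t \<notin> \<int>) \<or>
             (T / 2 \<le> t \<and> t < T \<and> (1 - T) / (T - t) \<notin> \<int>))
            \<longrightarrow> (\<exists>(H :: (real \<Rightarrow> real) set) L (M :: (real \<Rightarrow> real) measure) X f.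
                   periodic_shift_class H \<and> invariant_ILF H L \<and>
                   periodic_stationary_process H M X \<and>
                   cadlag_density_on T M (\<lambda>\<omega>. L (X \<omega>) 0 T) f \<and>
                   f t = density_bound T t))"
proof (intro conjI allI impI)
  fix H :: "(real \<Rightarrow> real) set" and L and M :: "'w measure" and X T f t
  assume "periodic_shift_class H \<and> invariant_ILF H L \<and> periodic_stationary_process H M X \<and>
            0 < T \<and> T \<le> 1 \<and> cadlag_density_on T M (\<lambda>\<omega>. L (X \<omega>) 0 T) f \<and> t \<in> {0<..<T}"
  then show "f t \<le> density_bound T t" using part1 by blast
next
  fix T t :: real
  assume "0 < T \<and> T \<le> 1 \<and>
            ((0 < t \<and> t < T / 2 \<and> (1 - T) / t \<notin> \<int>) \<or>
             (T / 2 \<le> t \<and> t < T \<and> (1 - T) / (T - t) \<notin> \<int>))"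
  then show "\<exists>(H :: (real \<Rightarrow> real) set) L (M :: (real \<Rightarrow> real) measure) X f.
                   periodic_shift_class H \<and> invariant_ILF H L \<and>
                   periodic_stationary_process H M X \<and>
                   cadlag_density_on T M (\<lambda>\<omega>. L (X \<omega>) 0 T) f \<and>
                   f t = density_bound T t" using part2 by blast
qed


end
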